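(* For integers $n\ge0$ and $m\ge0$, the out-degree $Y_{n,0}$ of the root node $0_1$ in a random ordered increasing $k$-tree of size $n$ satisfies \[ \mathbb{P}\{Y_{n,0}=m\}=\frac{\binom{m-\frac{k-1}{k}}{m}}{\binom{n-\frac{k}{k+1}}{n}}\sum_{\ell=0}^{m}\binom{m}{\ell}(-1)^{\ell}\binom{n-1-\frac{k\ell}{k+1}}{n}. \] Moreover, as $n\to\infty$, $n^{-\frac{k}{k+1}}Y_{n,0}$ converges in distribution to a random variable $Y_0$ uniquely determined by its moments, which are, for all integers $s\ge0$, \[ \mathbb{E}(Y_0^s)=\frac{\Gamma(\frac{1}{k+1})\,\Gamma(s+\frac1k)}{\Gamma(\frac1k)\,\Gamma(\frac{k}{k+1}s+\frac{1}{k+1})}. \]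
   Context: Fix an integer $k\ge1$. An ordered increasing $k$-tree of size $n\ge0$ is built as follows. Start with the root-clique $K_0$: $k$ pairwise adjacent vertices labelled $0_1,\dots,0_k$ (the root nodes; each label $0_\ell$ has value $0$). For $j=1,\dots,n$ in turn, node $j$ is inserted by choosing a currently existing $k$-clique $K$ and attaching $j$ to it, i.e. adding edges from $j$ to all $k$ vertices of $K$; $j$ is then a child of $K$ and the vertices of $K$ are the parents of $j$. The $k$-cliques available for attachment are the root-clique and, for every previously inserted node $x$ attached to a clique $K'$, the $k$ cliques $\{x\}\cup(K'\setminus\{w\})$, $w\in K'$. The children of each $k$-clique are linearly ordered: if $K$ currently has $d^+(K)$ children, there are $d^+(K)+1$ positions at which the new child may be placed, and the choice of position is part of the structure. Thus there are $1+(k+1)(j-1)$ ways to insert node $j$, and distinct sequences of choices give distinct trees. A random ordered increasing $k$-tree of size $n$ is one chosen uniformly among all of them; equivalently, it is produced by the process in which node $n$ is attached to the clique $K$ with probability $\frac{d^+(K)+1}{1+(k+1)(n-1)}$ (and a uniformly random position among the $d^+(K)+1$). The out-degree of a node $u$ is the number of nodes having $u$ as a parent (for a root node this is its number of non-root neighbours). For real $x$ and integer $m\ge0$, $\binom{x}{m}=x(x-1)\cdots(x-m+1)/m!$, and $\binom{x}{m}=0$ for $m<0$. *)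

theory Defs
  imports "HOL-Probability.Probability"
begin

text \<open>Vertices: root nodes 0_1,...,0_k are Root 1,...,Root k; node j is Node j.\<close>
datatype vertex = Root nat | Node nat

text \<open>A choice for inserting a node: the clique it is attached to and its position
  among the (current) children of that clique, a number in 0..d+(K).\<close>
type_synonym choice = "vertex set \<times> nat"

definition root_clique :: "nat \<Rightarrow> vertex set" where
  "root_clique k = Root ` {1..k}"

text \<open>Cliques available after inserting nodes 1..length ts (node i+1 is the i-th entry).\<close>
definition cliques :: "nat \<Rightarrow> choice list \<Rightarrow> vertex set set" where
  "cliques k ts = insert (root_clique k)
     (\<Union>i<length ts. (\<lambda>w. insert (Node (Suc i)) (fst (ts ! i) - {w})) ` fst (ts ! i))"

definition outdeg_clique :: "choice list \<Rightarrow> vertex set \<Rightarrow> nat" where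
  "outdeg_clique ts K = card {i. i < length ts \<and> fst (ts ! i) = K}"

inductive valid_tree :: "nat \<Rightarrow> choice list \<Rightarrow> bool" for k :: nat where
  Nil: "valid_tree k []"
| snoc: "valid_tree k ts \<Longrightarrow> K \<in> cliques k ts \<Longrightarrow> p \<le> outdeg_clique ts K
          \<Longrightarrow> valid_tree k (ts @ [(K, p)])"

text \<open>Ordered increasing k-trees of size n (as sequences of insertion choices).\<close>
definition trees :: "nat \<Rightarrow> nat \<Rightarrow> choice list set" where
  "trees k n = {ts. valid_tree k ts \<and> length ts = n}"

definition root_outdeg :: "choice list \<Rightarrow> nat" where
  "root_outdeg ts = card {i. i < length ts \<and> Root 1 \<in> fst (ts ! i)}"

definition random_tree :: "nat \<Rightarrow> nat \<Rightarrow> choice list pmf" where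
  "random_tree k n = pmf_of_set (trees k n)"

end

theory Submission
  imports Defs "HOL-Probability.Probability"
begin


lemma cliques_snoc:
  "cliques k (ts @ [(K,p)]) = cliques k ts \<union> (\<lambda>w. insert (Node (Suc (length ts))) (K - {w})) ` K"
proof -
  have "(\<Union>i<length (ts @ [(K,p)]). (\<lambda>w. insert (Node (Suc i)) (fst ((ts @ [(K,p)]) ! i) - {w})) ` fst ((ts @ [(K,p)]) ! i))
     = (\<Union>i<length ts. (\<lambda>w. insert (Node (Suc i)) (fst (ts ! i) - {w})) ` fst (ts ! i))
       \<union> (\<lambda>w. insert (Node (Suc (length ts))) (K - {w})) ` K"
    by (simp add: lessThan_Suc nth_append Un_commute)
  then show ?thesis unfolding cliques_def by (simp add: Un_assoc)
qed

lemma outdeg_snoc: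
  "outdeg_clique (ts @ [(K,p)]) K' = outdeg_clique ts K' + (if K' = K then 1 else 0)"
proof -
  have "{i. i < length (ts @ [(K,p)]) \<and> fst ((ts @ [(K,p)]) ! i) = K'} =
        {i. i < length ts \<and> fst (ts ! i) = K'} \<union> (if K' = K then {length ts} else {})"
    by (auto simp: nth_append less_Suc_eq)
  then show ?thesis unfolding outdeg_clique_def by (simp add: card_insert_if)
qed

lemma root_outdeg_snoc:
  "root_outdeg (ts @ [(K,p)]) = root_outdeg ts + (if Root 1 \<in> K then 1 else 0)"
proof -
  have "{i. i < length (ts @ [(K,p)]) \<and> Root 1 \<in> fst ((ts @ [(K,p)]) ! i)} =
        {i. i < length ts \<and> Root 1 \<in> fst (ts ! i)} \<union> (if Root 1 \<in> K then {length ts} else {})"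
    by (auto simp: nth_append less_Suc_eq)
  then show ?thesis unfolding root_outdeg_def by (simp add: card_insert_if)
qed

lemma card_root_clique: "card (root_clique k) = k"
  unfolding root_clique_def by (subst card_image) (auto simp: inj_on_def)

lemma cliques_Nil: "cliques k [] = {root_clique k}"
  unfolding cliques_def by simp

lemma valid_inv:
  assumes "valid_tree k ts" "k \<ge> 1"
  shows "\<forall>C\<in>cliques k ts. card C = k \<and> (\<forall>j. Node j \<in> C \<longrightarrow> j \<le> length ts)"
  using assms
proof (induction rule: valid_tree.induct)
  case Nil
  then show ?case using card_root_clique[of k] by (auto simp: cliques_Nil root_clique_def)
next
  case (snoc ts K p)
  have K: "card K = k" "\<And>j. Node j \<in> K \<Longrightarrow> j \<le> length ts"
    using snoc by auto
  have fin: "finite K" using K(1) snoc.prems by (intro card_ge_0_finite) auto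
  have new: "card (insert (Node (Suc (length ts))) (K - {w})) = k" if "w \<in> K" for w
  proof -
    have "Node (Suc (length ts)) \<notin> K - {w}" using K(2) by force
    then have "card (insert (Node (Suc (length ts))) (K - {w})) = Suc (card (K - {w}))"
      using fin by simp
    also have "\<dots> = k" using that K(1) fin snoc.prems by (simp add: card_Diff_singleton)
    finally show ?thesis .
  qed
  show ?case unfolding cliques_snoc
  proof
    fix C assume "C \<in> cliques k ts \<union> (\<lambda>w. insert (Node (Suc (length ts))) (K - {w})) ` K"
    then show "card C = k \<and> (\<forall>j. Node j \<in> C \<longrightarrow> j \<le> length (ts @ [(K, p)]))"
    proof
      assume "C \<in> cliques k ts"
      then show ?thesis using snoc.IH snoc.prems by fastforce
    next
      assume "C \<in> (\<lambda>w. insert (Node (Suc (length ts))) (K - {w})) ` K"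
      then obtain w where "w \<in> K" "C = insert (Node (Suc (length ts))) (K - {w})" by blast
      then show ?thesis using new K(2) by fastforce
    qed
  qed
qed

lemma cliques_finite_members:
  assumes "valid_tree k ts" "k \<ge> 1" "C \<in> cliques k ts"
  shows "finite C" "card C = k" "\<And>j. Node j \<in> C \<Longrightarrow> j \<le> length ts"
  using valid_inv[OF assms(1,2)] assms(2,3) by (auto intro: card_ge_0_finite)

lemma new_cliques_inj:
  assumes "valid_tree k ts" "k \<ge> 1" "K \<in> cliques k ts"
  shows "inj_on (\<lambda>w. insert (Node (Suc (length ts))) (K - {w})) K"
proof (rule inj_onI)
  fix w w' assume ww: "w \<in> K" "w' \<in> K"
    and eq: "insert (Node (Suc (length ts))) (K - {w}) = insert (Node (Suc (length ts))) (K - {w'})"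
  have nK: "Node (Suc (length ts)) \<notin> K" using cliques_finite_members(3)[OF assms] by force
  have "K - {w} = K - {w'}"
  proof -
    have "K - {w} = insert (Node (Suc (length ts))) (K - {w}) - {Node (Suc (length ts))}" using nK by auto
    also note eq
    also have "insert (Node (Suc (length ts))) (K - {w'}) - {Node (Suc (length ts))} = K - {w'}" using nK by auto
    finally show ?thesis .
  qed
  then show "w = w'" using ww by blast
qed

lemma new_cliques_disjoint:
  assumes "valid_tree k ts" "k \<ge> 1"
  shows "cliques k ts \<inter> (\<lambda>w. insert (Node (Suc (length ts))) (K - {w})) ` K = {}"
  using cliques_finite_members(3)[OF assms] by fastforce

lemma card_cliques:
  assumes "valid_tree k ts" "k \<ge> 1"
  shows "finite (cliques k ts) \<and> card (cliques k ts) = 1 + k * length ts"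
  using assms
proof (induction rule: valid_tree.induct)
  case Nil
  then show ?case by (simp add: cliques_Nil)
next
  case (snoc ts K p)
  have fin: "finite K" "card K = k" using cliques_finite_members[OF snoc(1) snoc.prems snoc(2)] by auto
  have ci: "card ((\<lambda>w. insert (Node (Suc (length ts))) (K - {w})) ` K) = k"
    using card_image[OF new_cliques_inj[OF snoc(1) snoc.prems snoc(2)]] fin by simp
  show ?case unfolding cliques_snoc
    using snoc.IH snoc.prems fin ci new_cliques_disjoint[OF snoc(1) snoc.prems, of K]
    by (simp add: card_Un_disjoint)
qed

lemma card_root_cliques:
  assumes "valid_tree k ts" "k \<ge> 1"
  shows "card {C \<in> cliques k ts. Root 1 \<in> C} = 1 + (k - 1) * root_outdeg ts"
  using assms
proof (induction rule: valid_tree.induct)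
  case Nil
  then have "Root 1 \<in> root_clique k" by (auto simp: root_clique_def)
  then have "{C \<in> cliques k []. Root 1 \<in> C} = {root_clique k}" by (auto simp: cliques_Nil)
  then show ?case by (simp add: root_outdeg_def)
next
  case (snoc ts K p)
  let ?f = "\<lambda>w. insert (Node (Suc (length ts))) (K - {w})"
  have fin: "finite K" "card K = k" using cliques_finite_members[OF snoc(1) snoc.prems snoc(2)] by auto
  have fc: "finite (cliques k ts)" using card_cliques[OF snoc(1) snoc.prems] by simp
  have split: "{C \<in> cliques k ts \<union> ?f ` K. Root 1 \<in> C} =
     {C \<in> cliques k ts. Root 1 \<in> C} \<union> ?f ` {w \<in> K. Root 1 \<in> K \<and> w \<noteq> Root 1}"
    by auto
  have inj: "inj_on ?f {w \<in> K. Root 1 \<in> K \<and> w \<noteq> Root 1}"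
    using new_cliques_inj[OF snoc(1) snoc.prems snoc(2)] by (rule inj_on_subset) auto
  have c2: "card {w \<in> K. Root 1 \<in> K \<and> w \<noteq> Root 1} = (if Root 1 \<in> K then k - 1 else 0)"
  proof (cases "Root 1 \<in> K")
    case True
    then have "{w \<in> K. Root 1 \<in> K \<and> w \<noteq> Root 1} = K - {Root 1}" by auto
    then show ?thesis using True fin by (simp add: card_Diff_singleton)
  qed simp
  have disj: "{C \<in> cliques k ts. Root 1 \<in> C} \<inter> ?f ` {w \<in> K. Root 1 \<in> K \<and> w \<noteq> Root 1} = {}"
    using new_cliques_disjoint[OF snoc(1) snoc.prems, of K] by blast
  have "card {C \<in> cliques k (ts @ [(K, p)]). Root 1 \<in> C} =
        card {C \<in> cliques k ts. Root 1 \<in> C} + card {w \<in> K. Root 1 \<in> K \<and> w \<noteq> Root 1}"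
    unfolding cliques_snoc split
    by (subst card_Un_disjoint) (use fc fin disj card_image[OF inj] in auto)
  also have "\<dots> = 1 + (k - 1) * root_outdeg (ts @ [(K, p)])"
    using snoc.IH snoc.prems c2 by (simp add: root_outdeg_snoc algebra_simps)
  finally show ?case .
qed

lemma sum_card_fibres:
  assumes "finite C" "finite I"
  shows "(\<Sum>K\<in>C. card {i\<in>I. f i = K}) = card {i\<in>I. f i \<in> C}"
  using assms(1)
proof (induction C rule: finite_induct)
  case (insert x F)
  have "{i\<in>I. f i \<in> insert x F} = {i\<in>I. f i = x} \<union> {i\<in>I. f i \<in> F}" by auto
  moreover have "{i\<in>I. f i = x} \<inter> {i\<in>I. f i \<in> F} = {}" using insert by auto
  ultimately show ?case using insert assms(2) by (simp add: card_Un_disjoint)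
qed simp

lemma fst_in_cliques:
  assumes "valid_tree k ts"
  shows "\<forall>i<length ts. fst (ts ! i) \<in> cliques k ts"
  using assms
proof (induction rule: valid_tree.induct)
  case (snoc ts K p)
  then show ?case by (auto simp: cliques_snoc nth_append less_Suc_eq)
qed simp

lemma sum_outdeg:
  assumes "valid_tree k ts" "k \<ge> 1" "C0 \<subseteq> cliques k ts"
  shows "(\<Sum>K\<in>C0. outdeg_clique ts K) = card {i. i < length ts \<and> fst (ts ! i) \<in> C0}"
proof -
  have "finite C0" using card_cliques[OF assms(1,2)] assms(3) finite_subset by blast
  from sum_card_fibres[OF this, of "{..<length ts}" "\<lambda>i. fst (ts ! i)"] show ?thesis
    unfolding outdeg_clique_def by (simp add: lessThan_def conj_commute)
qed

definition ext :: "nat \<Rightarrow> choice list \<Rightarrow> choice set" where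
  "ext k ts = {(K,p). K \<in> cliques k ts \<and> p \<le> outdeg_clique ts K}"

lemma card_ext_sub:
  assumes "valid_tree k ts" "k \<ge> 1" "C0 \<subseteq> cliques k ts"
  shows "card {(K,p). K \<in> C0 \<and> p \<le> outdeg_clique ts K} = card C0 + card {i. i < length ts \<and> fst (ts ! i) \<in> C0}"
proof -
  have fin: "finite C0" using card_cliques[OF assms(1,2)] assms(3) finite_subset by blast
  have "{(K,p). K \<in> C0 \<and> p \<le> outdeg_clique ts K} = Sigma C0 (\<lambda>K. {..outdeg_clique ts K})" by auto
  then have "card {(K,p). K \<in> C0 \<and> p \<le> outdeg_clique ts K} = (\<Sum>K\<in>C0. outdeg_clique ts K + 1)"
    using fin by (simp add: card_SigmaI)
  also have "\<dots> = card C0 + (\<Sum>K\<in>C0. outdeg_clique ts K)" by (simp add: sum_Suc)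
  finally show ?thesis using sum_outdeg[OF assms] by simp
qed

lemma card_ext:
  assumes "valid_tree k ts" "k \<ge> 1"
  shows "card (ext k ts) = 1 + (k + 1) * length ts"
proof -
  have "card (ext k ts) = card (cliques k ts) + card {i. i < length ts \<and> fst (ts ! i) \<in> cliques k ts}"
    unfolding ext_def by (rule card_ext_sub[OF assms]) simp
  also have "{i. i < length ts \<and> fst (ts ! i) \<in> cliques k ts} = {..<length ts}"
    using fst_in_cliques[OF assms(1)] by auto
  finally show ?thesis using card_cliques[OF assms] by simp
qed

lemma card_ext_root:
  assumes "valid_tree k ts" "k \<ge> 1"
  shows "card {x \<in> ext k ts. Root 1 \<in> fst x} = 1 + k * root_outdeg ts"
proof -
  have "{x \<in> ext k ts. Root 1 \<in> fst x} = {(K,p). K \<in> {C \<in> cliques k ts. Root 1 \<in> C} \<and> p \<le> outdeg_clique ts K}"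
    unfolding ext_def by auto
  also have "card \<dots> = card {C \<in> cliques k ts. Root 1 \<in> C} + card {i. i < length ts \<and> fst (ts ! i) \<in> {C \<in> cliques k ts. Root 1 \<in> C}}"
    by (rule card_ext_sub[OF assms]) auto
  also have "{i. i < length ts \<and> fst (ts ! i) \<in> {C \<in> cliques k ts. Root 1 \<in> C}} = {i. i < length ts \<and> Root 1 \<in> fst (ts ! i)}"
    using fst_in_cliques[OF assms(1)] by auto
  finally show ?thesis using card_root_cliques[OF assms] assms(2)
    unfolding root_outdeg_def by (simp add: algebra_simps)
qed

lemma finite_ext: "valid_tree k ts \<Longrightarrow> k \<ge> 1 \<Longrightarrow> finite (ext k ts)"
  using card_ext[of k ts] by (intro card_ge_0_finite) auto

lemma valid_snoc_iff:
  "valid_tree k (ts @ [x]) \<longleftrightarrow> valid_tree k ts \<and> x \<in> ext k ts"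
proof
  assume "valid_tree k (ts @ [x])"
  then show "valid_tree k ts \<and> x \<in> ext k ts"
    by (cases rule: valid_tree.cases) (auto simp: ext_def)
next
  assume "valid_tree k ts \<and> x \<in> ext k ts"
  then show "valid_tree k (ts @ [x])"
    by (cases x) (auto simp: ext_def intro: valid_tree.snoc)
qed

lemma trees_Suc:
  "trees k (Suc n) = (\<lambda>(ts,x). ts @ [x]) ` (SIGMA ts:trees k n. ext k ts)"
proof (intro equalityI subsetI)
  fix ts' assume "ts' \<in> trees k (Suc n)"
  then have v: "valid_tree k ts'" and l: "length ts' = Suc n" by (auto simp: trees_def)
  then have e: "ts' = butlast ts' @ [last ts']"
    by (metis append_butlast_last_id list.size(3) nat.simps(3))
  with v have "valid_tree k (butlast ts') \<and> last ts' \<in> ext k (butlast ts')"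
    by (metis valid_snoc_iff)
  with l e show "ts' \<in> (\<lambda>(ts,x). ts @ [x]) ` (SIGMA ts:trees k n. ext k ts)"
    by (intro image_eqI[of _ _ "(butlast ts', last ts')"]) (auto simp: trees_def)
next
  fix ts' assume "ts' \<in> (\<lambda>(ts,x). ts @ [x]) ` (SIGMA ts:trees k n. ext k ts)"
  then show "ts' \<in> trees k (Suc n)" by (auto simp: trees_def valid_snoc_iff)
qed

lemma inj_snoc: "inj_on (\<lambda>(ts,x). ts @ [x]) A"
  by (rule inj_onI) auto

lemma trees_0: "trees k 0 = {[]}"
  by (auto simp: trees_def intro: valid_tree.Nil)

lemma card_trees:
  assumes "k \<ge> 1"
  shows "finite (trees k n) \<and> card (trees k n) = (\<Prod>j<n. 1 + (k + 1) * j)"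
proof (induction n)
  case 0
  then show ?case by (simp add: trees_0)
next
  case (Suc n)
  have ts: "\<And>ts. ts \<in> trees k n \<Longrightarrow> valid_tree k ts \<and> length ts = n" by (simp add: trees_def)
  have fin: "finite (SIGMA ts:trees k n. ext k ts)"
    using Suc.IH finite_ext ts assms by (intro finite_SigmaI) auto
  have "card (trees k (Suc n)) = card (SIGMA ts:trees k n. ext k ts)"
    unfolding trees_Suc by (rule card_image[OF inj_snoc])
  also have "\<dots> = (\<Sum>ts\<in>trees k n. card (ext k ts))"
    using Suc.IH finite_ext ts assms by (intro card_SigmaI) auto
  also have "\<dots> = (\<Sum>ts\<in>trees k n. 1 + (k + 1) * n)"
    using card_ext ts assms by (intro sum.cong) auto
  finally show ?case using Suc.IH fin unfolding trees_Suc by (simp add: mult.commute)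
qed

definition Tc :: "nat \<Rightarrow> nat \<Rightarrow> nat \<Rightarrow> nat" where
  "Tc k n m = card {ts \<in> trees k n. root_outdeg ts = m}"

lemma Tc_0: "Tc k 0 m = (if m = 0 then 1 else 0)"
proof -
  have "{ts \<in> trees k 0. root_outdeg ts = m} = (if m = 0 then {[]} else {})"
    by (auto simp: trees_0 root_outdeg_def)
  then show ?thesis by (simp add: Tc_def)
qed

lemma Tc_Suc:
  assumes "k \<ge> 1"
  shows "real (Tc k (Suc n) m) = real (Tc k n m) * (real ((k + 1) * n) - real k * real m)
     + (if m = 0 then 0 else real (Tc k n (m - 1)) * (1 + real k * (real m - 1)))"
proof -
  have ts: "\<And>ts. ts \<in> trees k n \<Longrightarrow> valid_tree k ts \<and> length ts = n" by (simp add: trees_def)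
  have finT: "finite (trees k n)" using card_trees[OF assms] by simp
  define F where "F ts = {x \<in> ext k ts. root_outdeg ts + (if Root 1 \<in> fst x then 1 else 0) = m}" for ts
  have eq: "{ts' \<in> trees k (Suc n). root_outdeg ts' = m} = (\<lambda>(ts,x). ts @ [x]) ` (SIGMA ts:trees k n. F ts)"
    unfolding trees_Suc F_def by (force simp: root_outdeg_snoc)
  have "Tc k (Suc n) m = card (SIGMA ts:trees k n. F ts)"
    unfolding Tc_def eq by (rule card_image[OF inj_snoc])
  also have "\<dots> = (\<Sum>ts\<in>trees k n. card (F ts))"
    using finT finite_ext ts assms by (intro card_SigmaI) (auto simp: F_def)
  finally have 1: "real (Tc k (Suc n) m) = (\<Sum>ts\<in>trees k n. real (card (F ts)))" by simp
  have cF: "real (card (F ts)) = (if root_outdeg ts = m then real (1 + (k + 1) * n) - real (1 + k * m) else 0)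
            + (if Suc (root_outdeg ts) = m then real (1 + k * root_outdeg ts) else 0)"
    if "ts \<in> trees k n" for ts
  proof -
    have v: "valid_tree k ts" "length ts = n" using ts that by auto
    have fe: "finite (ext k ts)" using finite_ext v assms by auto
    have part: "card {x \<in> ext k ts. Root 1 \<in> fst x} + card {x \<in> ext k ts. Root 1 \<notin> fst x} = card (ext k ts)"
      using fe by (subst card_Un_disjoint[symmetric]) (auto intro: arg_cong[where f=card])
    have ce: "card (ext k ts) = 1 + (k+1) * n" using card_ext v assms by simp
    have cr: "card {x \<in> ext k ts. Root 1 \<in> fst x} = 1 + k * root_outdeg ts" using card_ext_root v assms by simp
    show ?thesis
    proof (cases "root_outdeg ts = m")
      case True
      then have FT: "F ts = {x \<in> ext k ts. Root 1 \<notin> fst x}" by (auto simp: F_def)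
      have h: "k * m + card {x \<in> ext k ts. Root 1 \<notin> fst x} = (k + 1) * n"
        using True part ce cr by simp
      have "real (k * m) + real (card {x \<in> ext k ts. Root 1 \<notin> fst x}) = real ((k + 1) * n)"
        by (metis h of_nat_add)
      then show ?thesis using True FT by simp
    next
      case False
      show ?thesis
      proof (cases "Suc (root_outdeg ts) = m")
        case True
        then have "F ts = {x \<in> ext k ts. Root 1 \<in> fst x}" by (auto simp: F_def)
        then show ?thesis using True False cr by simp
      next
        case False2: False
        then have "F ts = {}" using False by (auto simp: F_def)
        then show ?thesis using False False2 by simp
      qed
    qed
  qed
  have 2: "(\<Sum>ts\<in>trees k n. (if root_outdeg ts = m then real (1 + (k + 1) * n) - real (1 + k * m) else 0))
      = real (Tc k n m) * (real ((k + 1) * n) - real k * real m)"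
    unfolding Tc_def using finT by (simp add: sum.inter_filter[symmetric] algebra_simps)
  have 3: "(\<Sum>ts\<in>trees k n. (if Suc (root_outdeg ts) = m then real (1 + k * root_outdeg ts) else 0))
      = (if m = 0 then 0 else real (Tc k n (m - 1)) * (1 + real k * (real m - 1)))"
  proof (cases m)
    case (Suc m')
    have "(\<Sum>ts\<in>trees k n. (if Suc (root_outdeg ts) = m then real (1 + k * root_outdeg ts) else 0))
        = (\<Sum>ts\<in>{ts \<in> trees k n. root_outdeg ts = m'}. real (1 + k * m'))"
      using finT Suc by (subst sum.inter_filter) (auto intro!: sum.cong)
    then show ?thesis using Suc by (simp add: Tc_def algebra_simps)
  qed simp
  show ?thesis unfolding 1 using cF 2 3 by (simp add: sum.distrib)
qed

lemma nonempty_trees: "k \<ge> 1 \<Longrightarrow> trees k n \<noteq> {}"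
  using card_trees[of k n] by auto

lemma pmf_tree:
  assumes "k \<ge> 1"
  shows "pmf (map_pmf root_outdeg (random_tree k n)) m = real (Tc k n m) / real (card (trees k n))"
proof -
  have "pmf (map_pmf root_outdeg (random_tree k n)) m = measure_pmf.prob (random_tree k n) (root_outdeg -` {m})"
    by (simp add: pmf_map)
  also have "\<dots> = real (card (trees k n \<inter> root_outdeg -` {m})) / real (card (trees k n))"
    unfolding random_tree_def using card_trees[OF assms] nonempty_trees[OF assms]
    by (subst measure_pmf_of_set) auto
  also have "trees k n \<inter> root_outdeg -` {m} = {ts \<in> trees k n. root_outdeg ts = m}" by auto
  finally show ?thesis by (simp add: Tc_def)
qed


fun Pr :: "nat \<Rightarrow> nat \<Rightarrow> nat \<Rightarrow> real" where
  "Pr k 0 m = (if m = 0 then 1 else 0)"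
| "Pr k (Suc n) m = Pr k n m * (1 - (1 + real k * real m) / (1 + (real k + 1) * real n))
     + (if m = 0 then 0 else Pr k n (m - 1) * (1 + real k * (real m - 1)) / (1 + (real k + 1) * real n))"

lemma pmf_Pr:
  assumes "k \<ge> 1"
  shows "pmf (map_pmf root_outdeg (random_tree k n)) m = Pr k n m"
proof (induction n arbitrary: m)
  case 0
  then show ?case using card_trees[OF assms, of 0] by (simp add: pmf_tree[OF assms] Tc_0)
next
  case (Suc n)
  define N where "N = real (card (trees k n))"
  have "card (trees k n) > 0" using card_trees[OF assms, of n]
    by (auto intro!: prod_pos)
  then have N: "N > 0" by (simp add: N_def)
  have cS: "real (card (trees k (Suc n))) = N * (1 + (real k + 1) * real n)"
    using card_trees[OF assms, of "Suc n"] card_trees[OF assms, of n] by (simp add: N_def algebra_simps)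
  have A: "1 + (real k + 1) * real n > 0" by (simp add: add_pos_nonneg)
  have IH: "real (Tc k n m) = Pr k n m * N" for m
    using Suc.IH[of m] N by (simp add: pmf_tree[OF assms] N_def field_simps)
  define X where "X = Pr k n m * (real ((k + 1) * n) - real k * real m)
     + (if m = 0 then 0 else Pr k n (m - 1) * (1 + real k * (real m - 1)))"
  have "real (Tc k (Suc n) m) = N * X"
    unfolding Tc_Suc[OF assms] IH X_def by (simp add: algebra_simps)
  then have "pmf (map_pmf root_outdeg (random_tree k (Suc n))) m = X / (1 + (real k + 1) * real n)"
    unfolding pmf_tree[OF assms] cS using N by simp
  also have "\<dots> = Pr k (Suc n) m"
  proof -
    define a where "a = 1 + (real k + 1) * real n"
    have a: "a > 0" "real ((k + 1) * n) = a - 1" using A by (simp_all add: a_def algebra_simps)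
    have "Pr k n m * (a - 1 - real k * real m) / a = Pr k n m * (1 - (1 + real k * real m) / a)"
      using a(1) by (simp add: field_simps)
    then show ?thesis unfolding X_def Pr.simps a_def[symmetric] a(2)
      by (simp add: add_divide_distrib)
  qed
  finally show ?case .
qed

definition Am :: "nat \<Rightarrow> nat \<Rightarrow> real" where
  "Am k m = (real m - (real k - 1) / real k) gchoose m"
definition Bn :: "nat \<Rightarrow> nat \<Rightarrow> real" where
  "Bn k n = (real n - real k / (real k + 1)) gchoose n"
definition gg :: "nat \<Rightarrow> nat \<Rightarrow> nat \<Rightarrow> real" where
  "gg k n l = (real n - 1 - real k * real l / (real k + 1)) gchoose n"
definition Sg :: "nat \<Rightarrow> nat \<Rightarrow> nat \<Rightarrow> real" where
  "Sg k n m = (\<Sum>l = 0..m. real (m choose l) * (-1) ^ l * gg k n l)"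
definition Fc :: "nat \<Rightarrow> nat \<Rightarrow> nat \<Rightarrow> real" where
  "Fc k n m = Am k m / Bn k n * Sg k n m"

lemma gg_Suc: "real (Suc n) * gg k (Suc n) l = (real n - real k * real l / (real k + 1)) * gg k n l"
  using gbinomial_absorption[of n "real n - real k * real l / (real k + 1)"]
  by (simp add: gg_def algebra_simps)

lemma Bn_Suc: "real (Suc n) * Bn k (Suc n) = (real (Suc n) - real k / (real k + 1)) * Bn k n"
  using gbinomial_absorption[of n "real (Suc n) - real k / (real k + 1)"]
  by (simp add: Bn_def algebra_simps)

lemma Am_Suc: "k \<ge> 1 \<Longrightarrow> real (Suc m) * Am k (Suc m) = (real m + 1 / real k) * Am k m"
  using gbinomial_absorption[of m "real (Suc m) - (real k - 1) / real k"]
  by (simp add: Am_def algebra_simps diff_divide_distrib)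

lemma Bn_pos: "Bn k n > 0"
proof (induction n)
  case 0
  then show ?case by (simp add: Bn_def)
next
  case (Suc n)
  have "real k / (real k + 1) < 1" by simp
  then have "real (Suc n) - real k / (real k + 1) > 0" by linarith
  with Suc Bn_Suc[of n k] show ?case
    by (metis mult_pos_pos of_nat_0_less_iff zero_less_Suc zero_less_mult_pos)
qed

lemma Sg_0: "Sg k 0 m = (if m = 0 then 1 else 0)"
proof (cases "m = 0")
  case False
  then show ?thesis
    using choose_alternating_sum[of m, where 'a=real]
    by (simp add: Sg_def gg_def atLeast0AtMost mult.commute)
qed (simp add: Sg_def gg_def)

lemma Fc_0: "Fc k 0 m = (if m = 0 then 1 else 0)"
  by (simp add: Fc_def Sg_0 Am_def Bn_def)

lemma sum_absorb:
  assumes "m \<ge> 1"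
  shows "(\<Sum>l = 0..m. real (m choose l) * (real m - real l) * (-1) ^ l * gg k n l) = real m * Sg k n (m - 1)"
proof -
  obtain m' where m': "m = Suc m'" using assms by (cases m) auto
  have "(\<Sum>l = 0..m. real (m choose l) * (real m - real l) * (-1) ^ l * gg k n l)
      = (\<Sum>l = 0..m. real m * (real (m' choose l) * (-1) ^ l * gg k n l))"
  proof (rule sum.cong[OF refl])
    fix l assume "l \<in> {0..m}"
    then have "real m - real l = real (m - l)" by simp
    moreover have "real (m - l) * real (m choose l) = real m * real (m' choose l)"
      using binomial_absorb_comp[of m l] m' by (metis diff_Suc_1 of_nat_mult)
    ultimately show "real (m choose l) * (real m - real l) * (-1) ^ l * gg k n l
      = real m * (real (m' choose l) * (-1) ^ l * gg k n l)"
      by (metis (no_types, lifting) mult.assoc mult.commute)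
  qed
  also have "\<dots> = real m * (\<Sum>l = 0..m. real (m' choose l) * (-1) ^ l * gg k n l)"
    by (rule sum_distrib_left[symmetric])
  also have "(\<Sum>l = 0..m. real (m' choose l) * (-1) ^ l * gg k n l) = Sg k n m'"
    unfolding m' Sg_def by (subst sum.atLeast0_atMost_Suc) simp
  finally show ?thesis using m' by simp
qed

lemma Sg_Suc:
  "real (Suc n) * Sg k (Suc n) m = (real n - real k / (real k + 1) * real m) * Sg k n m
     + (if m = 0 then 0 else real k / (real k + 1) * real m * Sg k n (m - 1))"
proof -
  let ?c = "real k / (real k + 1)"
  have "real (Suc n) * Sg k (Suc n) m = (\<Sum>l = 0..m. real (m choose l) * (-1) ^ l * (real (Suc n) * gg k (Suc n) l))"
    unfolding Sg_def sum_distrib_left by (intro sum.cong) (simp_all add: algebra_simps)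
  also have "\<dots> = (\<Sum>l = 0..m. real (m choose l) * (-1) ^ l * ((real n - ?c * real m) * gg k n l
        + ?c * ((real m - real l) * gg k n l)))"
    unfolding gg_Suc by (intro sum.cong) (simp_all add: algebra_simps)
  also have "\<dots> = (real n - ?c * real m) * Sg k n m
     + ?c * (\<Sum>l = 0..m. real (m choose l) * (real m - real l) * (-1) ^ l * gg k n l)"
    unfolding Sg_def sum_distrib_left distrib_left sum.distrib by (simp add: algebra_simps)
  also have "(\<Sum>l = 0..m. real (m choose l) * (real m - real l) * (-1) ^ l * gg k n l)
     = (if m = 0 then 0 else real m * Sg k n (m - 1))"
    using sum_absorb[of m k n] by simp
  finally show ?thesis by simp
qed

lemma Fc_Suc:
  assumes "k \<ge> 1"
  shows "Fc k (Suc n) m = Fc k n m * (1 - (1 + real k * real m) / (1 + (real k + 1) * real n))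
     + (if m = 0 then 0 else Fc k n (m - 1) * (1 + real k * (real m - 1)) / (1 + (real k + 1) * real n))"
proof -
  define c where "c = real k / (real k + 1)"
  define a where "a = 1 + (real k + 1) * real n"
  define d where "d = real n + 1 - c"
  have k1: "real k + 1 > 0" by simp
  have c1: "c < 1" unfolding c_def by simp
  have pos: "d > 0" using c1 by (simp add: d_def)
  have a: "a = (real k + 1) * d" unfolding a_def c_def d_def using k1 by (simp add: field_simps)
  have apos: "a > 0" unfolding a_def by (simp add: add_pos_nonneg)
  have B: "Bn k n > 0" by (rule Bn_pos)
  have id1: "1 - (1 + real k * real m) / a = (real n - c * real m) / d"
  proof -
    have "1 - (1 + real k * real m) / a = (a - 1 - real k * real m) / a" using apos by (simp add: field_simps)
    also have "a - 1 - real k * real m = (real k + 1) * (real n - c * real m)"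
      unfolding a_def c_def using k1 by (simp add: field_simps)
    finally show ?thesis unfolding a using k1 pos by simp
  qed
  have id2: "real k / a = c / d" unfolding a c_def using k1 pos by simp
  have dd: "real (Suc n) - real k / (real k + 1) = d" by (simp add: d_def c_def)
  have Bs: "Bn k (Suc n) = d * Bn k n / real (Suc n)"
    using Bn_Suc[of n k] unfolding dd by (simp add: eq_divide_eq mult.commute del: of_nat_Suc)
  have Ss: "Sg k (Suc n) m = ((real n - c * real m) * Sg k n m + (if m = 0 then 0 else c * real m * Sg k n (m - 1))) / real (Suc n)"
    using Sg_Suc[of n k m] unfolding c_def[symmetric] by (simp add: eq_divide_eq mult.commute del: of_nat_Suc)
  have FS: "Fc k (Suc n) m = Am k m / Bn k n * (((real n - c * real m) * Sg k n m + (if m = 0 then 0 else c * real m * Sg k n (m - 1))) / d)"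
    unfolding Fc_def Bs Ss using B pos by (simp del: of_nat_Suc)
  show ?thesis
  proof (cases "m = 0")
    case True
    show ?thesis unfolding FS a_def[symmetric] id1 using True by (simp add: Fc_def)
  next
    case False
    then obtain m' where m': "m = Suc m'" by (cases m) auto
    have Am: "Am k (m - 1) * (1 + real k * (real m - 1)) = real k * real m * Am k m"
      using Am_Suc[OF assms, of m'] assms m' by (simp add: field_simps)
    have "Fc k n (m - 1) * (1 + real k * (real m - 1)) / a = Am k m / Bn k n * (c * real m * Sg k n (m - 1) / d)"
    proof -
      have "Fc k n (m - 1) * (1 + real k * (real m - 1)) / a = (Am k (m - 1) * (1 + real k * (real m - 1))) / Bn k n * Sg k n (m - 1) / a"
        unfolding Fc_def by simp
      also have "\<dots> = Am k m / Bn k n * (real m * Sg k n (m - 1)) * (real k / a)"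
        unfolding Am by simp
      finally show ?thesis unfolding id2 by simp
    qed
    then show ?thesis unfolding FS a_def[symmetric] id1 using False
      by (simp add: Fc_def add_divide_distrib distrib_left)
  qed
qed

lemma Pr_Fc:
  assumes "k \<ge> 1"
  shows "Pr k n m = Fc k n m"
proof (induction n arbitrary: m)
  case 0
  then show ?case by (simp add: Fc_0)
next
  case (Suc n)
  then show ?case by (simp add: Fc_Suc[OF assms])
qed


lemma Pr_zero: "d > n \<Longrightarrow> Pr k n d = 0"
proof (induction n arbitrary: d)
  case (Suc n)
  then show ?case by auto
qed simp

definition EE :: "nat \<Rightarrow> nat \<Rightarrow> (nat \<Rightarrow> real) \<Rightarrow> real" where
  "EE k n f = (\<Sum>d\<le>n. Pr k n d * f d)"

lemma EE_Suc:
  "EE k (Suc n) f = (\<Sum>d\<le>n. Pr k n d * (f d * (1 - (1 + real k * real d) / (1 + (real k + 1) * real n))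
      + f (Suc d) * ((1 + real k * real d) / (1 + (real k + 1) * real n))))"
proof -
  let ?A = "1 + (real k + 1) * real n"
  have "EE k (Suc n) f = (\<Sum>d\<le>Suc n. Pr k n d * (1 - (1 + real k * real d) / ?A) * f d)
     + (\<Sum>d\<le>Suc n. (if d = 0 then 0 else Pr k n (d - 1) * (1 + real k * (real d - 1)) / ?A) * f d)"
    unfolding EE_def Pr.simps by (simp add: sum.distrib[symmetric] algebra_simps)
  also have "(\<Sum>d\<le>Suc n. Pr k n d * (1 - (1 + real k * real d) / ?A) * f d)
      = (\<Sum>d\<le>n. Pr k n d * (1 - (1 + real k * real d) / ?A) * f d)"
    by (simp add: Pr_zero)
  also have "(\<Sum>d\<le>Suc n. (if d = 0 then 0 else Pr k n (d - 1) * (1 + real k * (real d - 1)) / ?A) * f d)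
      = (\<Sum>d\<le>n. Pr k n d * (1 + real k * real d) / ?A * f (Suc d))"
    by (subst sum.atMost_Suc_shift) simp
  finally show ?thesis by (simp add: sum.distrib[symmetric] algebra_simps)
qed

lemma EE_1: "EE k n (\<lambda>_. 1) = 1"
proof (induction n)
  case 0
  then show ?case by (simp add: EE_def)
next
  case (Suc n)
  then show ?case unfolding EE_Suc by (simp add: EE_def algebra_simps)
qed

lemma EE_mono: assumes "k \<ge> 1" "\<And>d. d \<le> n \<Longrightarrow> f d \<le> g d" shows "EE k n f \<le> EE k n g"
proof -
  have "Pr k n d \<ge> 0" for d using pmf_Pr[OF assms(1), of n d] by (metis pmf_nonneg)
  then show ?thesis unfolding EE_def using assms(2) by (intro sum_mono mult_left_mono) auto
qed

lemma EE_linear: "EE k n (\<lambda>d. a * f d + b * g d) = a * EE k n f + b * EE k n g"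
  unfolding EE_def by (simp add: sum.distrib sum_distrib_left algebra_simps)

lemma poch_diff:
  "pochhammer (x + 1) (Suc s) - pochhammer x (Suc s) = real (Suc s) * pochhammer (x + 1) s"
  by (simp only: pochhammer_rec'[of "x + 1"] pochhammer_rec[of x]) (simp add: algebra_simps)

definition WW :: "nat \<Rightarrow> nat \<Rightarrow> nat \<Rightarrow> real" where
  "WW k n s = EE k n (\<lambda>d. pochhammer (real d + 1 / real k) s)"

lemma WW_Suc:
  assumes "k \<ge> 1"
  shows "WW k (Suc n) s = WW k n s * (1 + real k * real s / (1 + (real k + 1) * real n))"
proof (cases s)
  case 0
  then show ?thesis using EE_1 by (simp add: WW_def)
next
  case (Suc s')
  let ?A = "1 + (real k + 1) * real n"
  have A: "?A > 0" by (simp add: add_pos_nonneg)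
  have "pochhammer (real d + 1 / real k) s * (1 - (1 + real k * real d) / ?A)
      + pochhammer (real (Suc d) + 1 / real k) s * ((1 + real k * real d) / ?A)
      = pochhammer (real d + 1 / real k) s * (1 + real k * real s / ?A)" for d
  proof -
    let ?x = "real d + 1 / real k"
    have kx: "1 + real k * real d = real k * ?x" using assms by (simp add: field_simps)
    have "pochhammer (?x + 1) s - pochhammer ?x s = real s * pochhammer (?x + 1) s'"
      using poch_diff[of ?x s'] Suc by simp
    moreover have "?x * pochhammer (?x + 1) s' = pochhammer ?x s" using Suc by (simp add: pochhammer_rec)
    moreover have e: "real (Suc d) + 1 / real k = ?x + 1" by simp
    ultimately have F1: "pochhammer (real (Suc d) + 1 / real k) s = pochhammer ?x s + real s * pochhammer (?x + 1) s'"
      by (simp only: e)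
    have abs: "P * (1 - k' * x / A) + (P + s0 * Q) * (k' * x / A) = P * (1 + k' * s0 / A)"
      if "x * Q = P" for P Q x k' s0 A :: real
    proof -
      from that have "P = Q * x" by (simp add: mult.commute)
      then show ?thesis by (simp add: algebra_simps add_divide_distrib)
    qed
    show ?thesis unfolding F1 kx
      by (rule abs) (rule \<open>?x * pochhammer (?x + 1) s' = pochhammer ?x s\<close>)
  qed
  then show ?thesis unfolding WW_def EE_Suc by (simp add: EE_def sum_distrib_right mult.assoc)
qed

lemma WW_closed:
  assumes "k \<ge> 1"
  shows "WW k n s = pochhammer (1 / real k) s * pochhammer (1 / (real k + 1) + real k / (real k + 1) * real s) n
                    / pochhammer (1 / (real k + 1)) n"
proof (induction n)
  case 0
  then show ?case by (simp add: WW_def EE_def)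
next
  case (Suc n)
  have k1: "real k + 1 > 0" by simp
  have b: "1 / (real k + 1) + real n > 0" by (simp add: add_pos_nonneg)
  have e1: "1 / (real k + 1) + real k / (real k + 1) * real s + real n = (1 + (real k + 1) * real n + real k * real s) / (real k + 1)"
    using k1 by (simp add: field_simps)
  have e2: "1 / (real k + 1) + real n = (1 + (real k + 1) * real n) / (real k + 1)"
    using k1 by (simp add: field_simps)
  have A: "1 + (real k + 1) * real n > 0" by (simp add: add_pos_nonneg)
  have "1 + real k * real s / (1 + (real k + 1) * real n)
      = (1 / (real k + 1) + real k / (real k + 1) * real s + real n) / (1 / (real k + 1) + real n)"
    unfolding e1 e2 using k1 A b by (simp add: add_divide_distrib distrib_left)
  note r = this
  show ?case unfolding WW_Suc[OF assms] Suc r pochhammer_rec'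
    by (simp only: times_divide_times_eq mult_ac)
qed


lemma poch_ratio_lim:
  fixes a b :: real
  assumes "a > 0" "b > 0"
  shows "(\<lambda>n. pochhammer a n / pochhammer b n / real n powr (a - b)) \<longlonglongrightarrow> Gamma b / Gamma a"
proof -
  have poch: "pochhammer z n = fact n * real n powr z / Gamma_series z n / (z + real n)"
    if "z > 0" "n > 0" for z :: real and n
  proof -
    have p1: "pochhammer z (n + 1) > 0" "pochhammer z n > 0" using that by (simp_all add: pochhammer_pos)
    have "Gamma_series z n = fact n * real n powr z / pochhammer z (n + 1)"
      using that by (simp add: Gamma_series_def powr_def)
    moreover have "pochhammer z (n + 1) = (z + real n) * pochhammer z n" by (simp add: pochhammer_rec')
    moreover have G: "Gamma_series z n > 0" using that p1 unfolding Gamma_series_def powr_def by simp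
    ultimately have e: "pochhammer z n * ((z + real n) * Gamma_series z n) = fact n * real n powr z"
      using p1 by (simp add: field_simps)
    have nz: "(z + real n) * Gamma_series z n \<noteq> 0" using G that by simp
    have "pochhammer z n = fact n * real n powr z / ((z + real n) * Gamma_series z n)"
      using e nz by (simp add: eq_divide_eq)
    then show ?thesis by (simp add: divide_divide_eq_left mult.commute)
  qed
  have ev: "eventually (\<lambda>n. pochhammer a n / pochhammer b n / real n powr (a - b)
      = Gamma_series b n / Gamma_series a n * ((b + real n) / (a + real n))) sequentially"
    using eventually_gt_at_top[of "0::nat"]
  proof eventually_elim
    case (elim n)
    have gs: "Gamma_series z n > 0" if "z > 0" for z :: real
      using that elim by (simp add: Gamma_series_def pochhammer_pos)
    have abs: "(F * P / Ga / u) / (F * Q / Gb / v) / R = Gb / Ga * (v / u)"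
      if "F > 0" "Q > 0" "R > 0" "Ga > 0" "Gb > 0" "u > 0" "v > 0" "Q * R = P" for F P Q R Ga Gb u v :: real
    proof -
      have "P \<noteq> 0" using that by (metis mult_pos_pos less_irrefl)
      then show ?thesis using that by (simp add: field_simps)
    qed
    have "real n powr b * real n powr (a - b) = real n powr a"
      using elim by (simp add: powr_add[symmetric])
    then show ?case unfolding poch[OF assms(1) elim] poch[OF assms(2) elim]
      using gs[OF assms(1)] gs[OF assms(2)] elim assms
      by (intro abs) (auto simp: add_pos_nonneg)
  qed
  have r: "(\<lambda>n. (b + real n) / (a + real n)) \<longlonglongrightarrow> 1"
  proof -
    have "eventually (\<lambda>n. (b + real n) / (a + real n) = (b * inverse (real n) + 1) / (a * inverse (real n) + 1)) sequentially"
      using eventually_gt_at_top[of "0::nat"]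
    proof eventually_elim
      case (elim n)
      have e1: "b * inverse (real n) + 1 = (b + real n) / real n" and e2: "a * inverse (real n) + 1 = (a + real n) / real n"
        using elim by (simp_all add: field_simps)
      show ?case unfolding e1 e2 using elim by simp
    qed
    moreover have "(\<lambda>n. (b * inverse (real n) + 1) / (a * inverse (real n) + 1)) \<longlonglongrightarrow> (b * 0 + 1) / (a * 0 + 1)"
      by (intro tendsto_intros lim_inverse_n) simp
    ultimately show ?thesis by (simp add: tendsto_cong)
  qed
  have "(\<lambda>n. Gamma_series b n / Gamma_series a n * ((b + real n) / (a + real n))) \<longlonglongrightarrow> Gamma b / Gamma a * 1"
    using assms by (intro tendsto_intros Gamma_series_LIMSEQ r) (simp add: Gamma_real_pos[THEN less_imp_neq, symmetric])
  then show ?thesis using ev by (simp add: tendsto_cong)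
qed

lemma power_diff_le:
  fixes a b :: real
  assumes "0 \<le> b" "b \<le> a"
  shows "a ^ n - b ^ n \<le> real n * (a - b) * a ^ (n - 1)"
proof (induction n)
  case (Suc n)
  have "a ^ Suc n - b ^ Suc n = a * (a ^ n - b ^ n) + b ^ n * (a - b)" by (simp add: algebra_simps)
  also have "\<dots> \<le> a * (real n * (a - b) * a ^ (n - 1)) + a ^ n * (a - b)"
    using assms Suc by (intro add_mono mult_left_mono mult_right_mono power_mono) auto
  also have "\<dots> = real (Suc n) * (a - b) * a ^ n"
    by (cases n) (simp_all add: algebra_simps)
  finally show ?case by simp
qed simp

lemma poch_lower:
  assumes "x \<ge> 0" "k \<ge> 1"
  shows "x ^ s \<le> pochhammer (x + 1 / real k) s"
proof -
  have "x ^ s = (\<Prod>i\<in>{0..<s}. x)" by simp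
  also have "\<dots> \<le> (\<Prod>i\<in>{0..<s}. x + 1 / real k + real i)"
    using assms by (intro prod_mono) auto
  finally show ?thesis by (simp add: pochhammer_prod)
qed

lemma poch_upper:
  assumes "x \<ge> 0" "k \<ge> 1"
  shows "pochhammer (x + 1 / real k) s \<le> (x + real s) ^ s"
proof -
  have "pochhammer (x + 1 / real k) s = (\<Prod>i\<in>{0..<s}. x + 1 / real k + real i)" by (simp add: pochhammer_prod)
  also have "\<dots> \<le> (\<Prod>i\<in>{0..<s}. x + real s)"
  proof (intro prod_mono conjI)
    fix i assume "i \<in> {0..<s}"
    then have "real i + 1 \<le> real s" by simp
    moreover have "1 / real k \<le> 1" using assms by simp
    ultimately show "x + 1 / real k + real i \<le> x + real s" by linarith
    show "0 \<le> x + 1 / real k + real i" using assms by simp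
  qed
  finally show ?thesis by simp
qed

lemma poch_gap:
  assumes "x \<ge> 0" "k \<ge> 1" "s \<ge> 1"
  shows "pochhammer (x + 1 / real k) s - x ^ s
     \<le> real s * real s * real (s + 1) ^ (s - 1) * (pochhammer (x + 1 / real k) (s - 1) + 1)"
proof -
  have "pochhammer (x + 1 / real k) s - x ^ s \<le> (x + real s) ^ s - x ^ s"
    using poch_upper[OF assms(1,2)] by simp
  also have "\<dots> \<le> real s * real s * (x + real s) ^ (s - 1)"
    using power_diff_le[of x "x + real s" s] assms by simp
  also have "(x + real s) ^ (s - 1) \<le> real (s + 1) ^ (s - 1) * (x ^ (s - 1) + 1)"
  proof -
    have "x + real s \<le> real (s + 1) * max x 1"
    proof (cases "x \<le> 1")
      case False
      then have "real s \<le> x * real s" using mult_right_mono[of 1 x "real s"] by simp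
      then show ?thesis using False by (simp add: max_def algebra_simps)
    qed (simp add: max_def)
    then have "(x + real s) ^ (s - 1) \<le> (real (s + 1) * max x 1) ^ (s - 1)"
      using assms by (intro power_mono) auto
    also have "\<dots> = real (s + 1) ^ (s - 1) * max x 1 ^ (s - 1)" by (simp add: power_mult_distrib)
    also have "max x 1 ^ (s - 1) \<le> x ^ (s - 1) + 1"
      using assms(1) by (cases "x \<le> 1") (auto simp: max_def)
    then have "real (s + 1) ^ (s - 1) * max x 1 ^ (s - 1) \<le> real (s + 1) ^ (s - 1) * (x ^ (s - 1) + 1)"
      by (intro mult_left_mono) auto
    finally show ?thesis .
  qed
  then have "real s * real s * (x + real s) ^ (s - 1) \<le> real s * real s * (real (s + 1) ^ (s - 1) * (x ^ (s - 1) + 1))"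
    by (intro mult_left_mono) auto
  also have "x ^ (s - 1) \<le> pochhammer (x + 1 / real k) (s - 1)" by (rule poch_lower[OF assms(1,2)])
  then have "real s * real s * (real (s + 1) ^ (s - 1) * (x ^ (s - 1) + 1))
      \<le> real s * real s * (real (s + 1) ^ (s - 1) * (pochhammer (x + 1 / real k) (s - 1) + 1))"
    by (intro mult_left_mono) auto
  finally show ?thesis by (simp add: algebra_simps)
qed


definition mlim :: "nat \<Rightarrow> nat \<Rightarrow> real" where
  "mlim k s = Gamma (1 / (real k + 1)) * Gamma (real s + 1 / real k)
      / (Gamma (1 / real k) * Gamma (real k / (real k + 1) * real s + 1 / (real k + 1)))"

lemma mlim_pos: "k \<ge> 1 \<Longrightarrow> mlim k s > 0"
  unfolding mlim_def by (intro divide_pos_pos mult_pos_pos Gamma_real_pos) (auto intro!: add_nonneg_pos)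

lemma WW_lim:
  assumes "k \<ge> 1"
  shows "(\<lambda>n. WW k n s / real n powr (real k / (real k + 1) * real s)) \<longlonglongrightarrow> mlim k s"
proof -
  define b where "b = 1 / (real k + 1)"
  define a where "a = b + real k / (real k + 1) * real s"
  have b: "b > 0" unfolding b_def by simp
  have a: "a > 0" unfolding a_def using b by (simp add: add_pos_nonneg)
  have ab: "a - b = real k / (real k + 1) * real s" unfolding a_def by simp
  have "(\<lambda>n. pochhammer (1 / real k) s * (pochhammer a n / pochhammer b n / real n powr (a - b)))
     \<longlonglongrightarrow> pochhammer (1 / real k) s * (Gamma b / Gamma a)"
    by (intro tendsto_intros poch_ratio_lim a b)
  moreover have "pochhammer (1 / real k) s = Gamma (real s + 1 / real k) / Gamma (1 / real k)"
    using assms by (subst pochhammer_Gamma) (auto simp: add.commute dest!: nonpos_Ints_nonpos)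
  moreover have "WW k n s / real n powr (real k / (real k + 1) * real s)
     = pochhammer (1 / real k) s * (pochhammer a n / pochhammer b n / real n powr (a - b))" for n
    unfolding WW_closed[OF assms] ab by (simp add: a_def b_def)
  ultimately show ?thesis unfolding mlim_def by (simp add: a_def b_def add.commute mult_ac)
qed

definition Mm :: "nat \<Rightarrow> nat \<Rightarrow> nat \<Rightarrow> real" where
  "Mm k n s = EE k n (\<lambda>d. real d ^ s)"

lemma Mm_lim:
  assumes "k \<ge> 1"
  shows "(\<lambda>n. Mm k n s / real n powr (real k / (real k + 1) * real s)) \<longlonglongrightarrow> mlim k s"
proof (cases "s = 0")
  case True
  then show ?thesis using WW_lim[OF assms, of 0] by (simp add: Mm_def WW_def)
next
  case False
  define c where "c = real k / (real k + 1)"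
  have c: "c > 0" unfolding c_def using assms by simp
  define C where "C = real s * real s * real (s + 1) ^ (s - 1)"
  have C: "C \<ge> 0" unfolding C_def by simp
  have gap: "0 \<le> WW k n s - Mm k n s \<and> WW k n s - Mm k n s \<le> C * (WW k n (s - 1) + 1)" for n
  proof
    show "0 \<le> WW k n s - Mm k n s"
      unfolding WW_def Mm_def using EE_mono[OF assms, of n "\<lambda>d. real d ^ s"] poch_lower[OF _ assms] by simp
    have "WW k n s - Mm k n s = EE k n (\<lambda>d. pochhammer (real d + 1 / real k) s - real d ^ s)"
      unfolding WW_def Mm_def using EE_linear[of k n 1 _ "-1"] by simp
    also have "\<dots> \<le> EE k n (\<lambda>d. C * pochhammer (real d + 1 / real k) (s - 1) + C * 1)"
      by (intro EE_mono[OF assms]) (use poch_gap[OF _ assms] False in \<open>auto simp: C_def algebra_simps\<close>)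
    also have "\<dots> = C * (WW k n (s - 1) + 1)"
      using EE_linear[of k n C _ C "\<lambda>_. 1"] EE_1[of k n] by (simp add: WW_def algebra_simps)
    finally show "WW k n s - Mm k n s \<le> C * (WW k n (s - 1) + 1)" .
  qed
  have lim1: "(\<lambda>n. C * (WW k n (s - 1) / real n powr (c * real (s - 1)) * real n powr (- c) + real n powr (- (c * real s))))
     \<longlonglongrightarrow> C * (mlim k (s - 1) * 0 + 0)"
    unfolding c_def using False assms
    by (intro tendsto_intros WW_lim tendsto_neg_powr filterlim_real_sequentially) auto
  have "(\<lambda>n. (WW k n s - Mm k n s) / real n powr (c * real s)) \<longlonglongrightarrow> 0"
  proof (rule Lim_null_comparison)
    show "eventually (\<lambda>n. norm ((WW k n s - Mm k n s) / real n powr (c * real s)) \<le>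
        C * (WW k n (s - 1) / real n powr (c * real (s - 1)) * real n powr (- c) + real n powr (- (c * real s)))) sequentially"
      using eventually_gt_at_top[of "0::nat"]
    proof eventually_elim
      case (elim n)
      have p: "real n powr (c * real s) = real n powr (c * real (s - 1)) * real n powr c"
        using False by (simp add: powr_add[symmetric] of_nat_diff algebra_simps)
      have pp: "real n powr (c * real s) > 0" "real n powr (c * real (s - 1)) > 0" "real n powr c > 0"
        using elim by auto
      have "norm ((WW k n s - Mm k n s) / real n powr (c * real s)) = (WW k n s - Mm k n s) / real n powr (c * real s)"
        using gap[of n] pp by simp
      also have "\<dots> \<le> C * (WW k n (s - 1) + 1) / real n powr (c * real s)"
        using gap[of n] pp by (intro divide_right_mono) auto
      also have "\<dots> = C * (WW k n (s - 1) / real n powr (c * real (s - 1)) * real n powr (- c) + real n powr (- (c * real s)))"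
        unfolding powr_minus using pp p by (simp add: field_simps)
      finally show ?case .
    qed
    show "(\<lambda>n. C * (WW k n (s - 1) / real n powr (c * real (s - 1)) * real n powr (- c) + real n powr (- (c * real s)))) \<longlonglongrightarrow> 0"
      using lim1 by simp
  qed
  from tendsto_diff[OF WW_lim[OF assms, of s] this[unfolded c_def]]
  show ?thesis by (simp add: diff_divide_distrib)
qed

definition EZ :: "nat \<Rightarrow> nat \<Rightarrow> nat \<Rightarrow> real" where
  "EZ k n s = EE k n (\<lambda>d. (real n powr (- (real k / (real k + 1))) * real d) ^ s)"

lemma EZ_lim:
  assumes "k \<ge> 1"
  shows "(\<lambda>n. EZ k n s) \<longlonglongrightarrow> mlim k s"
proof -
  have "eventually (\<lambda>n. Mm k n s / real n powr (real k / (real k + 1) * real s) = EZ k n s) sequentially"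
    using eventually_gt_at_top[of "0::nat"]
  proof eventually_elim
    case (elim n)
    have "(real n powr (- (real k / (real k + 1))) * real d) ^ s
        = real d ^ s / real n powr (real k / (real k + 1) * real s)" for d
    proof -
      have "(real n powr (- (real k / (real k + 1)))) ^ s = real n powr (real s * (- (real k / (real k + 1))))"
        using elim by (intro powr_power) simp
      also have "\<dots> = inverse (real n powr (real k / (real k + 1) * real s))"
        by (simp add: powr_minus[symmetric] mult.commute)
      finally show ?thesis by (simp add: power_mult_distrib divide_inverse mult.commute)
    qed
    then show ?case unfolding EZ_def Mm_def EE_def by (simp add: sum_divide_distrib)
  qed
  with Mm_lim[OF assms, of s] show ?thesis by (simp add: tendsto_cong)
qed

lemma Gamma_shift_bound:
  fixes x c :: real
  assumes "x > 0" "0 < c" "c < 1"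
  shows "x * Gamma x \<le> Gamma (x + c) * (x + c) powr (1 - c)"
proof -
  have xc: "x + c > 0" using assms by simp
  have "(ln \<circ> Gamma) ((1 - (1 - c)) *\<^sub>R (x + c) + (1 - c) *\<^sub>R (x + c + 1))
      \<le> (1 - (1 - c)) * (ln \<circ> Gamma) (x + c) + (1 - c) * (ln \<circ> Gamma) (x + c + 1)"
    using assms by (intro convex_onD[OF log_convex_Gamma_real]) auto
  moreover have "(1 - (1 - c)) *\<^sub>R (x + c) + (1 - c) *\<^sub>R (x + c + 1) = x + 1"
    by (simp add: algebra_simps)
  moreover have "Gamma (x + c + 1) = (x + c) * Gamma (x + c)"
    using xc by (subst Gamma_plus1) (auto dest!: nonpos_Ints_nonpos)
  moreover have "Gamma (x + 1) = x * Gamma x"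
    using assms by (subst Gamma_plus1) (auto dest!: nonpos_Ints_nonpos)
  ultimately have "ln (x * Gamma x) \<le> c * ln (Gamma (x + c)) + (1 - c) * ln ((x + c) * Gamma (x + c))"
    by simp
  also have "ln ((x + c) * Gamma (x + c)) = ln (x + c) + ln (Gamma (x + c))"
    using xc by (intro ln_mult_pos) auto
  also have "c * ln (Gamma (x + c)) + (1 - c) * (ln (x + c) + ln (Gamma (x + c))) = ln (Gamma (x + c)) + (1 - c) * ln (x + c)"
    by (simp add: algebra_simps)
  also have "\<dots> = ln (Gamma (x + c) * (x + c) powr (1 - c))"
    using xc Gamma_real_pos[OF xc] by (simp add: ln_mult_pos ln_powr)
  finally show ?thesis using assms xc by simp
qed

lemma mlim_ratio:
  fixes k s :: nat
  assumes "k \<ge> 1"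
  defines "c \<equiv> real k / (real k + 1)" and "x \<equiv> real k / (real k + 1) * real s + 1 / (real k + 1)"
  shows "mlim k (Suc s) \<le> mlim k s * (real s + 1 / real k) * ((x + c) powr (1 - c) / x)"
proof -
  have c: "0 < c" "c < 1" unfolding c_def using assms by auto
  have x: "x > 0" unfolding x_def by (simp add: add_nonneg_pos)
  have k: "real s + 1 / real k > 0" using assms by (simp add: add_nonneg_pos)
  have G1: "Gamma (real (Suc s) + 1 / real k) = (real s + 1 / real k) * Gamma (real s + 1 / real k)"
  proof -
    have "real s + 1 / real k \<notin> \<int>\<^sub>\<le>\<^sub>0" using k by (auto dest: nonpos_Ints_nonpos)
    from Gamma_plus1[OF this] show ?thesis by (simp add: algebra_simps)
  qed
  have G2: "real k / (real k + 1) * real (Suc s) + 1 / (real k + 1) = x + c"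
    unfolding x_def c_def by (simp add: algebra_simps add_divide_distrib)
  have Gx: "Gamma x > 0" "Gamma (x + c) > 0" using x c by auto
  have gb: "Gamma x \<le> Gamma (x + c) * ((x + c) powr (1 - c) / x)"
    using Gamma_shift_bound[OF x c] x by (simp add: field_simps)
  have m0: "mlim k s = Gamma (1 / (real k + 1)) * Gamma (real s + 1 / real k) / (Gamma (1 / real k) * Gamma x)"
    unfolding mlim_def x_def ..
  have m1: "mlim k (Suc s) = Gamma (1 / (real k + 1)) * ((real s + 1 / real k) * Gamma (real s + 1 / real k)) / (Gamma (1 / real k) * Gamma (x + c))"
    unfolding mlim_def G1 G2 ..
  have gk: "Gamma (1 / real k) > 0" using assms by simp
  have "mlim k (Suc s) = mlim k s * (real s + 1 / real k) * (Gamma x / Gamma (x + c))"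
    unfolding m0 m1 using Gx gk by (simp add: field_simps)
  also have "\<dots> \<le> mlim k s * (real s + 1 / real k) * ((x + c) powr (1 - c) / x)"
    using gb Gx mlim_pos[OF assms(1), of s] k by (intro mult_left_mono) (auto simp: field_simps)
  finally show ?thesis .
qed

lemma mlim_summable:
  assumes "k \<ge> 1" "T \<ge> 0"
  shows "summable (\<lambda>s. mlim k s * T ^ s / fact s)"
proof -
  define c where "c = real k / (real k + 1)"
  define x where "x s = c * real s + 1 / (real k + 1)" for s :: nat
  have c: "0 < c" "c < 1" unfolding c_def using assms by auto
  have x: "x s > 0" for s unfolding x_def using c by (simp add: add_nonneg_pos)
  have xlim: "filterlim x at_top sequentially"
  proof -
    have "filterlim (\<lambda>s. 1 / (real k + 1) + c * real s) at_top sequentially"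
      by (intro filterlim_tendsto_add_at_top[OF tendsto_const] filterlim_tendsto_pos_mult_at_top[OF tendsto_const c(1)]
        filterlim_real_sequentially)
    then show ?thesis unfolding x_def by (simp add: add.commute)
  qed
  define h where "h s = (x s + c) powr (1 - c) / x s" for s
  have hlim: "h \<longlonglongrightarrow> 0"
  proof (rule Lim_null_comparison)
    show "(\<lambda>s. 2 powr (1 - c) * x s powr (- c)) \<longlonglongrightarrow> 0"
      using c by (auto intro!: tendsto_mult_right_zero tendsto_neg_powr xlim)
    have "eventually (\<lambda>s. x s \<ge> 1) sequentially" using xlim by (simp add: filterlim_at_top)
    then show "eventually (\<lambda>s. norm (h s) \<le> 2 powr (1 - c) * x s powr (- c)) sequentially"
    proof eventually_elim
      case (elim s)
      have "norm (h s) = (x s + c) powr (1 - c) / x s" unfolding h_def using x[of s] c by simp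
      also have "\<dots> \<le> (2 * x s) powr (1 - c) / x s"
        using elim c x[of s] by (intro divide_right_mono powr_mono2) auto
      also have "\<dots> = 2 powr (1 - c) * x s powr (- c)"
        using x[of s] by (simp add: powr_mult powr_diff powr_minus divide_inverse)
      finally show ?case .
    qed
  qed
  have "eventually (\<lambda>s. T * h s < 1 / 2) sequentially"
  proof -
    have "(\<lambda>s. T * h s) \<longlonglongrightarrow> T * 0" by (intro tendsto_intros hlim)
    from order_tendstoD(2)[OF this, of "1/2"] show ?thesis by simp
  qed
  then obtain N where N: "\<And>s. s \<ge> N \<Longrightarrow> T * h s < 1 / 2" by (auto simp: eventually_sequentially)
  show ?thesis
  proof (rule summable_ratio_test[of "1/2" N])
    fix s assume s: "s \<ge> N"
    have pos: "mlim k s * T ^ s / fact s \<ge> 0"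
      by (intro divide_nonneg_pos mult_nonneg_nonneg less_imp_le[OF mlim_pos[OF assms(1)]] zero_le_power assms(2)) simp
    have r: "mlim k (Suc s) \<le> mlim k s * (real s + 1 / real k) * h s"
      using mlim_ratio[OF assms(1), of s] unfolding h_def x_def c_def by (simp add: algebra_simps)
    have q: "(real s + 1 / real k) / real (Suc s) \<le> 1"
    proof -
      have "1 / real k \<le> 1" using assms(1) by simp
      then have "real s + 1 / real k \<le> real (Suc s)" by simp
      then show ?thesis by (simp del: of_nat_Suc)
    qed
    have hpos: "h s \<ge> 0" unfolding h_def using x[of s] by simp
    have "mlim k (Suc s) * T ^ Suc s / fact (Suc s) \<le> mlim k s * (real s + 1 / real k) * h s * T ^ Suc s / fact (Suc s)"
      using r assms(2) by (intro divide_right_mono mult_right_mono) auto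
    also have "\<dots> = (mlim k s * T ^ s / fact s) * ((real s + 1 / real k) / real (Suc s)) * (T * h s)"
      by (simp add: field_simps)
    also have "\<dots> \<le> (mlim k s * T ^ s / fact s) * 1 * (1 / 2)"
      using pos q N[OF s] hpos assms(2) by (intro mult_mono) auto
    finally have fin: "mlim k (Suc s) * T ^ Suc s / fact (Suc s) \<le> (mlim k s * T ^ s / fact s) * 1 * (1 / 2)" .
    have n1: "norm (mlim k (Suc s) * T ^ Suc s / fact (Suc s)) = mlim k (Suc s) * T ^ Suc s / fact (Suc s)"
      using mlim_pos[OF assms(1), of "Suc s"] assms(2) by (simp only: real_norm_def abs_of_nonneg divide_nonneg_pos
          mult_nonneg_nonneg less_imp_le zero_le_power fact_gt_zero)
    have n2: "norm (mlim k s * T ^ s / fact s) = mlim k s * T ^ s / fact s"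
      using pos by (simp only: real_norm_def abs_of_nonneg)
    show "norm (mlim k (Suc s) * T ^ Suc s / fact (Suc s)) \<le> 1 / 2 * norm (mlim k s * T ^ s / fact s)"
      unfolding n1 n2 using fin by simp
  qed simp
qed


lemma even_pow_nonneg: "(0::real) \<le> x ^ (2 * j)"
  by (simp add: power_mult)

lemma abs_pow_le: "\<bar>x::real\<bar> ^ j \<le> 1 + x ^ (2 * j)"
proof (cases "\<bar>x\<bar> \<le> 1")
  case True
  then have "\<bar>x\<bar> ^ j \<le> 1" by (simp add: power_le_one)
  then show ?thesis using even_pow_nonneg[of x j] by linarith
next
  case False
  then have "\<bar>x\<bar> ^ j \<le> \<bar>x\<bar> ^ (2 * j)" by (intro power_increasing) auto
  also have "\<bar>x\<bar> ^ (2 * j) = x ^ (2 * j)" by (simp add: power_abs[symmetric])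
  finally show ?thesis by simp
qed

lemma trunc_bound:
  fixes x R :: real
  assumes "R > 0"
  shows "\<bar>x ^ j - (max (- R) (min R x)) ^ j\<bar> \<le> 2 * x ^ (2 * j) / R ^ j"
proof (cases "\<bar>x\<bar> \<le> R")
  case True
  then have "max (- R) (min R x) = x" by auto
  moreover have "0 \<le> 2 * x ^ (2 * j) / R ^ j" using assms even_pow_nonneg[of x j] by simp
  ultimately show ?thesis by simp
next
  case False
  define y where "y = max (- R) (min R x)"
  have y: "\<bar>y\<bar> \<le> R" unfolding y_def using assms by auto
  have Rj: "R ^ j > 0" using assms by simp
  have "\<bar>x ^ j - y ^ j\<bar> \<le> \<bar>x\<bar> ^ j + \<bar>y\<bar> ^ j" by (metis abs_triangle_ineq4 power_abs)
  also have "\<bar>y\<bar> ^ j \<le> \<bar>x\<bar> ^ j" using y False by (intro power_mono) auto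
  also have "\<bar>x\<bar> ^ j + \<bar>x\<bar> ^ j = 2 * (\<bar>x\<bar> ^ j * R ^ j) / R ^ j" using Rj assms by simp
  also have "\<bar>x\<bar> ^ j * R ^ j \<le> \<bar>x\<bar> ^ j * \<bar>x\<bar> ^ j" using False assms by (intro mult_left_mono power_mono) auto
  also have "\<bar>x\<bar> ^ j * \<bar>x\<bar> ^ j = x ^ (2 * j)" by (simp add: power_add[symmetric] mult_2 power_abs[symmetric])
  finally show ?thesis using Rj unfolding y_def by (simp add: divide_right_mono)
qed

lemma bounded_moment:
  assumes "(X :: nat \<Rightarrow> real) \<longlonglongrightarrow> a"
  obtains B where "\<And>n. X n \<le> B"
proof -
  from convergent_imp_Bseq[OF convergentI[OF assms]] have "\<exists>K. \<forall>n. norm (X n) \<le> K" by (auto simp: Bseq_def)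
  then obtain K where "\<And>n. norm (X n) \<le> K" by blast
  then have "X n \<le> K" for n by (metis abs_le_D1 real_norm_def)
  then show ?thesis using that by blast
qed

context
  fixes M :: "nat \<Rightarrow> real measure" and N :: "real measure" and m :: "nat \<Rightarrow> real"
  assumes M: "\<And>n. real_distribution (M n)" and N: "real_distribution N" and conv: "weak_conv_m M N"
    and int: "\<And>n j. integrable (M n) (\<lambda>x. x ^ j)"
    and lim: "\<And>j. (\<lambda>n. \<integral>x. x ^ j \<partial>M n) \<longlonglongrightarrow> m j"
begin

interpretation N: real_distribution N by (rule N)
interpretation Mn: real_distribution "M n" for n by (rule M)

lemma limit_abs_moment:
  assumes B: "\<And>n. (\<integral>x. x ^ (2 * j) \<partial>M n) \<le> B"
  shows "integrable N (\<lambda>x. \<bar>x\<bar> ^ j) \<and> (\<integral>x. \<bar>x\<bar> ^ j \<partial>N) \<le> 1 + B"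
proof -
  define f where "f i x = min (\<bar>x\<bar> ^ j) (real i)" for i :: nat and x :: real
  have cont: "isCont (f i) x" for i x unfolding f_def by (intro continuous_intros)
  have fb: "norm (f i x) \<le> real i" for i x unfolding f_def by auto
  have fm: "f i \<in> borel_measurable borel" for i unfolding f_def by measurable
  have intM: "integrable (M n) (f i)" for n i
    by (rule Mn.integrable_const_bound[where B="real i"]) (use fb fm in auto)
  have intN: "integrable N (f i)" for i
    by (rule N.integrable_const_bound[where B="real i"]) (use fb fm in auto)
  have cv: "(\<lambda>n. \<integral>x. f i x \<partial>M n) \<longlonglongrightarrow> (\<integral>x. f i x \<partial>N)" for i
    by (rule weak_conv_imp_integral_bdd_continuous_conv[OF M N conv cont fb])
  have le: "(\<integral>x. f i x \<partial>M n) \<le> 1 + B" for i n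
  proof -
    have "(\<integral>x. f i x \<partial>M n) \<le> (\<integral>x. 1 + x ^ (2 * j) \<partial>M n)"
    proof (rule integral_mono[OF intM])
      show "integrable (M n) (\<lambda>x. 1 + x ^ (2 * j))"
        using int by (intro Bochner_Integration.integrable_add) auto
      show "f i x \<le> 1 + x ^ (2 * j)" for x unfolding f_def using abs_pow_le[of x j] by linarith
    qed
    also have "\<dots> = 1 + (\<integral>x. x ^ (2 * j) \<partial>M n)"
      using int Mn.prob_space[of n] by (subst Bochner_Integration.integral_add) auto
    finally show ?thesis using B[of n] by simp
  qed
  have leN: "(\<integral>x. f i x \<partial>N) \<le> 1 + B" for i
    by (rule LIMSEQ_le_const2[OF cv[of i]]) (use le in auto)
  have inc: "incseq (\<lambda>i. \<integral>x. f i x \<partial>N)"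
    unfolding incseq_Suc_iff using intN by (intro allI integral_mono) (auto simp: f_def)
  have sup: "(\<lambda>i. \<integral>x. f i x \<partial>N) \<longlonglongrightarrow> (SUP i. \<integral>x. f i x \<partial>N)"
    by (rule LIMSEQ_incseq_SUP[OF _ inc]) (use leN in \<open>auto intro!: bdd_aboveI2[where M="1 + B"]\<close>)
  have ptw: "(\<lambda>i. f i x) \<longlonglongrightarrow> \<bar>x\<bar> ^ j" for x
  proof (rule tendsto_eventually)
    obtain i0 :: nat where "\<bar>x\<bar> ^ j \<le> real i0" using real_arch_simple by blast
    then show "eventually (\<lambda>i. f i x = \<bar>x\<bar> ^ j) sequentially"
      unfolding eventually_sequentially f_def by (intro exI[of _ i0]) auto
  qed
  have mono: "mono (\<lambda>i. f i x)" for x unfolding f_def by (intro monoI) auto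
  have "integrable N (\<lambda>x. \<bar>x\<bar> ^ j)" "(\<integral>x. \<bar>x\<bar> ^ j \<partial>N) = (SUP i. \<integral>x. f i x \<partial>N)"
    by (rule integrable_monotone_convergence[OF intN _ _ sup] integral_monotone_convergence[OF intN _ _ sup];
        use mono ptw in \<open>auto\<close>)+
  moreover have "(SUP i. \<integral>x. f i x \<partial>N) \<le> 1 + B" by (rule cSUP_least) (use leN in auto)
  ultimately show ?thesis by simp
qed

lemma trunc_diff_bound:
  fixes L :: "real measure" and R :: real
  assumes R: "R > 0" and intL: "integrable L (\<lambda>x. x ^ j)" and intL2: "integrable L (\<lambda>x. x ^ (2 * j))"
    and gi: "integrable L (\<lambda>x. (max (- R) (min R x)) ^ j)"
  shows "\<bar>(\<integral>x. x ^ j \<partial>L) - (\<integral>x. (max (- R) (min R x)) ^ j \<partial>L)\<bar> \<le> 2 / R ^ j * (\<integral>x. x ^ (2 * j) \<partial>L)"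
proof -
  have "\<bar>(\<integral>x. x ^ j \<partial>L) - (\<integral>x. (max (- R) (min R x)) ^ j \<partial>L)\<bar>
      = \<bar>\<integral>x. x ^ j - (max (- R) (min R x)) ^ j \<partial>L\<bar>"
    using intL gi by (subst Bochner_Integration.integral_diff) auto
  also have "\<dots> \<le> (\<integral>x. \<bar>x ^ j - (max (- R) (min R x)) ^ j\<bar> \<partial>L)"
    using integral_norm_bound[of L "\<lambda>x. x ^ j - (max (- R) (min R x)) ^ j"] by simp
  also have "\<dots> \<le> (\<integral>x. 2 / R ^ j * x ^ (2 * j) \<partial>L)"
    using trunc_bound[OF R] intL gi intL2
    by (intro integral_mono) (auto intro!: Bochner_Integration.integrable_diff integrable_abs)
  also have "\<dots> = 2 / R ^ j * (\<integral>x. x ^ (2 * j) \<partial>L)" by simp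
  finally show ?thesis .
qed

lemma limit_moment: "integrable N (\<lambda>x. x ^ j) \<and> (\<integral>x. x ^ j \<partial>N) = m j"
proof (cases "j = 0")
  case True
  have "(\<lambda>n. \<integral>x. x ^ j \<partial>M n) = (\<lambda>n. 1)" using True Mn.prob_space by simp
  with lim[of j] have "m j = 1" using LIMSEQ_unique by (metis tendsto_const)
  then show ?thesis using True N.prob_space by simp
next
  case False
  obtain B where B: "\<And>n. (\<integral>x. x ^ (2 * j) \<partial>M n) \<le> B" using bounded_moment[OF lim[of "2 * j"]] by blast
  obtain B' where B': "\<And>n. (\<integral>x. x ^ (2 * (2 * j)) \<partial>M n) \<le> B'" using bounded_moment[OF lim[of "2 * (2 * j)"]] by blast
  have meas: "(\<lambda>x. x ^ j) \<in> borel_measurable N" by measurable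
  have iN: "integrable N (\<lambda>x. x ^ j)"
    using limit_abs_moment[OF B] integrable_abs_iff[OF meas] by (simp add: power_abs)
  have iN2: "integrable N (\<lambda>x. x ^ (2 * j))" and D: "(\<integral>x. x ^ (2 * j) \<partial>N) \<le> 1 + B'"
    using limit_abs_moment[OF B'] by (simp_all add: power_abs power_even_abs_numeral power_mult)
  define E where "E = 2 * B + 2 * (1 + B')"
  have bound: "\<bar>(\<integral>x. x ^ j \<partial>N) - m j\<bar> \<le> E / R ^ j" if R: "R > 0" for R
  proof -
    define g where "g x = (max (- R) (min R x)) ^ j" for x
    have gc: "isCont g x" for x unfolding g_def by (intro continuous_intros)
    have gb: "norm (g x) \<le> R ^ j" for x
    proof -
      have "\<bar>max (- R) (min R x)\<bar> \<le> R" using R by auto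
      then show ?thesis unfolding g_def real_norm_def power_abs by (intro power_mono) auto
    qed
    have gm: "g \<in> borel_measurable borel" unfolding g_def by measurable
    have giM: "integrable (M n) g" for n by (rule Mn.integrable_const_bound[where B="R ^ j"]) (use gb gm in auto)
    have giN: "integrable N g" by (rule N.integrable_const_bound[where B="R ^ j"]) (use gb gm in auto)
    have Rj: "2 / R ^ j > 0" using R by simp
    have a: "\<bar>(\<integral>x. x ^ j \<partial>M n) - (\<integral>x. g x \<partial>M n)\<bar> \<le> 2 / R ^ j * B" for n
      using trunc_diff_bound[OF R int int giM[unfolded g_def]] B[of n] Rj unfolding g_def
      by (meson mult_left_mono order_trans less_imp_le)
    have cvg: "(\<lambda>n. \<bar>(\<integral>x. x ^ j \<partial>M n) - (\<integral>x. g x \<partial>M n)\<bar>) \<longlonglongrightarrow> \<bar>m j - (\<integral>x. g x \<partial>N)\<bar>"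
      by (intro tendsto_intros lim weak_conv_imp_integral_bdd_continuous_conv[OF M N conv gc gb])
    have b1: "\<bar>m j - (\<integral>x. g x \<partial>N)\<bar> \<le> 2 / R ^ j * B"
      by (rule LIMSEQ_le_const2[OF cvg]) (use a in auto)
    have b2: "\<bar>(\<integral>x. x ^ j \<partial>N) - (\<integral>x. g x \<partial>N)\<bar> \<le> 2 / R ^ j * (1 + B')"
      using trunc_diff_bound[OF R iN iN2 giN[unfolded g_def]] D Rj unfolding g_def
      by (meson mult_left_mono order_trans less_imp_le)
    have "\<bar>(\<integral>x. x ^ j \<partial>N) - m j\<bar> \<le> 2 / R ^ j * B + 2 / R ^ j * (1 + B')" using b1 b2 by linarith
    also have "\<dots> = E / R ^ j" by (simp add: E_def add_divide_distrib[symmetric] algebra_simps)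
    finally show ?thesis .
  qed
  have "(\<lambda>i. E / real (Suc i) ^ j) \<longlonglongrightarrow> 0"
  proof -
    have "(\<lambda>i. E * (1 / real (Suc i)) ^ j) \<longlonglongrightarrow> E * 0 ^ j"
      by (intro tendsto_intros LIMSEQ_Suc[OF lim_inverse_n'])
    then show ?thesis using False by (simp add: power_one_over divide_inverse power_inverse zero_power)
  qed
  then have "\<bar>(\<integral>x. x ^ j \<partial>N) - m j\<bar> \<le> 0"
    by (rule LIMSEQ_le_const) (use bound in auto)
  then show ?thesis using iN by simp
qed

end


lemma psi_facts:
  fixes m :: "nat \<Rightarrow> real" and t :: real
  assumes summ: "summable (\<lambda>j. m j * \<bar>t\<bar> ^ j / fact j)" and mpos: "\<And>j. m j \<ge> 0"
  shows "(\<lambda>S. \<Sum>j\<le>2 * S. (\<i> * complex_of_real t) ^ j / fact j * complex_of_real (m j))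
          \<longlonglongrightarrow> (\<Sum>j. (\<i> * complex_of_real t) ^ j / fact j * complex_of_real (m j))"
    and "(\<lambda>S. m (2 * S) * \<bar>t\<bar> ^ (2 * S) / fact (2 * S)) \<longlonglongrightarrow> 0"
proof -
  let ?f = "\<lambda>j. (\<i> * complex_of_real t) ^ j / fact j * complex_of_real (m j)"
  have "norm (?f j) = m j * \<bar>t\<bar> ^ j / fact j" for j
  proof -
    have "norm (?f j) = (norm \<i> * norm (complex_of_real t)) ^ j / fact j * norm (complex_of_real (m j))"
      by (simp only: norm_mult norm_divide norm_power norm_fact)
    also have "\<dots> = \<bar>t\<bar> ^ j / fact j * m j" using mpos[of j] by (simp only: norm_ii norm_of_real mult_1 abs_of_nonneg)
    finally show ?thesis by (metis (no_types) mult.commute times_divide_eq_right)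
  qed
  then have "(\<lambda>j. norm (?f j)) = (\<lambda>j. m j * \<bar>t\<bar> ^ j / fact j)" by (rule ext)
  then have "summable ?f" using summ summable_norm_cancel by metis
  then have "(\<lambda>n. \<Sum>j<n. ?f j) \<longlonglongrightarrow> suminf ?f" by (rule summable_LIMSEQ)
  moreover have sm: "strict_mono (\<lambda>S::nat. Suc (2 * S))" by (rule strict_monoI) simp
  ultimately have "(\<lambda>S. \<Sum>j<Suc (2 * S). ?f j) \<longlonglongrightarrow> suminf ?f"
    using LIMSEQ_subseq_LIMSEQ unfolding comp_def by blast
  then show "(\<lambda>S. \<Sum>j\<le>2 * S. ?f j) \<longlonglongrightarrow> suminf ?f" by (simp only: lessThan_Suc_atMost)
  from summable_LIMSEQ_zero[OF summ]
  have "(\<lambda>j. m j * \<bar>t\<bar> ^ j / fact j) \<longlonglongrightarrow> 0" .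
  moreover have "strict_mono (\<lambda>S::nat. 2 * S)" by (rule strict_monoI) simp
  ultimately show "(\<lambda>S. m (2 * S) * \<bar>t\<bar> ^ (2 * S) / fact (2 * S)) \<longlonglongrightarrow> 0"
    using LIMSEQ_subseq_LIMSEQ unfolding comp_def by blast
qed

lemma char_moments:
  fixes N :: "real measure" and m :: "nat \<Rightarrow> real" and t :: real
  assumes N: "real_distribution N" and mom: "\<And>j. integrable N (\<lambda>x. x ^ j) \<and> (\<integral>x. x ^ j \<partial>N) = m j"
    and summ: "summable (\<lambda>j. m j * \<bar>t\<bar> ^ j / fact j)" and mpos: "\<And>j. m j \<ge> 0"
  shows "char N t = (\<Sum>j. (\<i> * complex_of_real t) ^ j / fact j * complex_of_real (m j))"
proof -
  interpret real_distribution N by (rule N)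
  let ?P = "\<lambda>S. \<Sum>j\<le>2 * S. (\<i> * complex_of_real t) ^ j / fact j * complex_of_real (m j)"
  note pf = psi_facts[OF summ mpos]
  have "(\<lambda>S. char N t - ?P S) \<longlonglongrightarrow> 0"
  proof (rule Lim_null_comparison)
    show "eventually (\<lambda>S. norm (char N t - ?P S) \<le> 2 * (m (2 * S) * \<bar>t\<bar> ^ (2 * S) / fact (2 * S))) sequentially"
    proof (intro always_eventually allI)
      fix S
      have "norm (char N t - ?P S) \<le> 2 * \<bar>t\<bar> ^ (2 * S) / fact (2 * S) * expectation (\<lambda>x. \<bar>x\<bar> ^ (2 * S))"
        using char_approx1[of "2 * S" t] mom by simp
      also have "expectation (\<lambda>x. \<bar>x\<bar> ^ (2 * S)) = m (2 * S)"
        using mom[of "2 * S"] by (simp add: power_mult power_even_abs_numeral)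
      finally show "norm (char N t - ?P S) \<le> 2 * (m (2 * S) * \<bar>t\<bar> ^ (2 * S) / fact (2 * S))"
        by (simp add: mult_ac)
    qed
    show "(\<lambda>S. 2 * (m (2 * S) * \<bar>t\<bar> ^ (2 * S) / fact (2 * S))) \<longlonglongrightarrow> 0"
      using tendsto_mult_right_zero[OF pf(2), of 2] by simp
  qed
  from tendsto_add[OF this pf(1)] have "(\<lambda>S. char N t) \<longlonglongrightarrow> 0 + (\<Sum>j. (\<i> * complex_of_real t) ^ j / fact j * complex_of_real (m j))"
    by simp
  from LIMSEQ_unique[OF tendsto_const this] show ?thesis by simp
qed

lemma char_conv_moments:
  fixes M :: "nat \<Rightarrow> real measure" and m :: "nat \<Rightarrow> real" and t :: real
  assumes M: "\<And>n. real_distribution (M n)" and int: "\<And>n j. integrable (M n) (\<lambda>x. x ^ j)"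
    and lim: "\<And>j. (\<lambda>n. \<integral>x. x ^ j \<partial>M n) \<longlonglongrightarrow> m j"
    and summ: "summable (\<lambda>j. m j * \<bar>t\<bar> ^ j / fact j)" and mpos: "\<And>j. m j \<ge> 0"
  shows "(\<lambda>n. char (M n) t) \<longlonglongrightarrow> (\<Sum>j. (\<i> * complex_of_real t) ^ j / fact j * complex_of_real (m j))"
proof -
  interpret Mn: real_distribution "M n" for n by (rule M)
  define \<psi> where "\<psi> = (\<Sum>j. (\<i> * complex_of_real t) ^ j / fact j * complex_of_real (m j))"
  let ?P = "\<lambda>S. \<Sum>j\<le>2 * S. (\<i> * complex_of_real t) ^ j / fact j * complex_of_real (m j)"
  let ?Q = "\<lambda>n S. \<Sum>j\<le>2 * S. (\<i> * complex_of_real t) ^ j / fact j * complex_of_real (\<integral>x. x ^ j \<partial>M n)"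
  note pf = psi_facts[OF summ mpos, folded \<psi>_def]
  have e0: "(\<lambda>j. inverse (fact j) * \<bar>t\<bar> ^ j) \<longlonglongrightarrow> 0"
    by (rule summable_LIMSEQ_zero[OF summable_exp])
  moreover have "strict_mono (\<lambda>S::nat. 2 * S)" by (rule strict_monoI) simp
  ultimately have e: "(\<lambda>S. inverse (fact (2 * S)) * \<bar>t\<bar> ^ (2 * S)) \<longlonglongrightarrow> 0"
    using LIMSEQ_subseq_LIMSEQ unfolding comp_def by blast
  define a where "a S = 2 * (m (2 * S) * \<bar>t\<bar> ^ (2 * S) / fact (2 * S)) + 2 * (inverse (fact (2 * S)) * \<bar>t\<bar> ^ (2 * S))" for S
  have alim: "a \<longlonglongrightarrow> 0"
    unfolding a_def using tendsto_add[OF tendsto_mult_right_zero[OF pf(2), of 2] tendsto_mult_right_zero[OF e, of 2]]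
    by simp
  have Plim: "(\<lambda>S. norm (?P S - \<psi>)) \<longlonglongrightarrow> 0"
    using tendsto_norm[OF tendsto_diff[OF pf(1) tendsto_const[of \<psi>]]] by simp
  show ?thesis unfolding \<psi>_def[symmetric]
  proof (rule LIMSEQ_I)
    fix r :: real assume r: "r > 0"
    have "eventually (\<lambda>S. a S < r / 3 \<and> norm (?P S - \<psi>) < r / 3) sequentially"
      using order_tendstoD(2)[OF alim, of "r/3"] order_tendstoD(2)[OF Plim, of "r/3"] r
      by (auto intro: eventually_conj)
    then obtain S where S1: "a S < r / 3" and S2: "norm (?P S - \<psi>) < r / 3"
      by (auto simp: eventually_sequentially)
    have Qlim: "(\<lambda>n. ?Q n S) \<longlonglongrightarrow> ?P S"
      by (intro tendsto_sum tendsto_mult tendsto_const tendsto_of_real lim)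
    have "eventually (\<lambda>n. norm (?Q n S - ?P S) < r / 3 \<and> (\<integral>x. x ^ (2 * S) \<partial>M n) < m (2 * S) + 1) sequentially"
      using order_tendstoD(2)[OF tendsto_norm[OF tendsto_diff[OF Qlim tendsto_const[of "?P S"]]], of "r/3"]
        order_tendstoD(2)[OF lim[of "2 * S"], of "m (2 * S) + 1"] r
      by (auto intro: eventually_conj)
    then obtain no where no: "\<And>n. n \<ge> no \<Longrightarrow> norm (?Q n S - ?P S) < r / 3 \<and> (\<integral>x. x ^ (2 * S) \<partial>M n) < m (2 * S) + 1"
      by (auto simp: eventually_sequentially)
    show "\<exists>no. \<forall>n\<ge>no. norm (char (M n) t - \<psi>) < r"
    proof (intro exI allI impI)
      fix n assume n: "n \<ge> no"
      have c1: "norm (char (M n) t - ?Q n S) \<le> 2 * \<bar>t\<bar> ^ (2 * S) / fact (2 * S) * (\<integral>x. \<bar>x\<bar> ^ (2 * S) \<partial>M n)"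
        using Mn.char_approx1[of "2 * S" n t] int by blast
      have ab: "(\<integral>x. \<bar>x\<bar> ^ (2 * S) \<partial>M n) = (\<integral>x. x ^ (2 * S) \<partial>M n)"
        by (simp add: power_mult power_even_abs_numeral)
      have c2: "2 * \<bar>t\<bar> ^ (2 * S) / fact (2 * S) * (\<integral>x. x ^ (2 * S) \<partial>M n) \<le> 2 * \<bar>t\<bar> ^ (2 * S) / fact (2 * S) * (m (2 * S) + 1)"
        using no[OF n] by (intro mult_left_mono) auto
      have c3: "2 * \<bar>t\<bar> ^ (2 * S) / fact (2 * S) * (m (2 * S) + 1) = a S"
        unfolding a_def by (simp add: field_simps)
      have "norm (char (M n) t - \<psi>) \<le> norm (char (M n) t - ?Q n S) + norm (?Q n S - ?P S) + norm (?P S - \<psi>)"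
      proof -
        have tri: "norm (a - d) \<le> norm (a - b) + norm (b - c) + norm (c - d)" for a b c d :: complex
        proof -
          have "a - d = ((a - b) + (b - c)) + (c - d)" by simp
          then have "norm (a - d) = norm (((a - b) + (b - c)) + (c - d))" by simp
          also have "\<dots> \<le> norm ((a - b) + (b - c)) + norm (c - d)" by (rule norm_triangle_ineq)
          also have "norm ((a - b) + (b - c)) \<le> norm (a - b) + norm (b - c)" by (rule norm_triangle_ineq)
          finally show ?thesis by simp
        qed
        show ?thesis by (rule tri)
      qed
      also have "\<dots> < r / 3 + r / 3 + r / 3"
        using c1[unfolded ab] c2 c3 S1 S2 no[OF n] by linarith
      finally show "norm (char (M n) t - \<psi>) < r" by simp
    qed
  qed
qed


definition qq :: "nat \<Rightarrow> nat \<Rightarrow> nat pmf" where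
  "qq k n = map_pmf root_outdeg (random_tree k n)"

definition mu :: "nat \<Rightarrow> nat \<Rightarrow> real measure" where
  "mu k n = distr (measure_pmf (qq k n)) borel (\<lambda>d. real n powr (- (real k / (real k + 1))) * real d)"

lemma set_qq:
  assumes "k \<ge> 1" "d \<in> set_pmf (qq k n)" shows "d \<le> n"
proof (rule ccontr)
  assume "\<not> d \<le> n"
  then have "pmf (qq k n) d = 0" using Pr_zero[of n d k] pmf_Pr[OF assms(1), of n d] by (simp add: qq_def)
  with assms(2) show False by (simp add: set_pmf_iff)
qed

lemma finite_set_qq:
  assumes "k \<ge> 1" shows "finite (set_pmf (qq k n))"
proof (rule finite_subset[of _ "{..n}"])
  show "set_pmf (qq k n) \<subseteq> {..n}" using set_qq[OF assms] by blast
qed simp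

lemma mu_rd: "real_distribution (mu k n)"
proof -
  have "prob_space (mu k n)" unfolding mu_def
    by (rule prob_space.prob_space_distr[OF prob_space_measure_pmf]) simp
  moreover have "sets (mu k n) = sets borel" unfolding mu_def by simp
  ultimately show ?thesis unfolding real_distribution_def real_distribution_axioms_def by blast
qed

lemma mu_integral:
  fixes f :: "real \<Rightarrow> real"
  assumes "k \<ge> 1" and f[measurable]: "f \<in> borel_measurable borel"
  shows "(\<integral>x. f x \<partial>mu k n) = EE k n (\<lambda>d. f (real n powr (- (real k / (real k + 1))) * real d))"
proof -
  let ?r = "real n powr (- (real k / (real k + 1)))"
  have "(\<integral>x. f x \<partial>mu k n) = (\<integral>d. f (?r * real d) \<partial>measure_pmf (qq k n))"
    unfolding mu_def by (rule integral_distr) auto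
  also have "\<dots> = (\<Sum>d\<in>{..n}. f (?r * real d) * pmf (qq k n) d)"
    using set_qq[OF assms(1)] by (intro integral_measure_pmf_real) auto
  also have "\<dots> = EE k n (\<lambda>d. f (?r * real d))"
    unfolding EE_def qq_def pmf_Pr[OF assms(1)] by (simp add: mult.commute)
  finally show ?thesis .
qed

lemma mu_integrable:
  fixes f :: "real \<Rightarrow> real"
  assumes "k \<ge> 1" and f[measurable]: "f \<in> borel_measurable borel"
  shows "integrable (mu k n) f"
  unfolding mu_def
  by (subst integrable_distr_eq) (auto intro!: integrable_measure_pmf_finite finite_set_qq assms(1))

lemma mu_moment: "k \<ge> 1 \<Longrightarrow> (\<integral>x. x ^ j \<partial>mu k n) = EZ k n j"
  by (subst mu_integral) (auto simp: EZ_def)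

lemma mu_tight:
  assumes "k \<ge> 1"
  shows "tight (mu k)"
  unfolding tight_def
proof (intro conjI allI impI mu_rd)
  fix \<epsilon> :: real assume e: "\<epsilon> > 0"
  obtain B where B: "\<And>n. EZ k n 2 \<le> B" using bounded_moment[OF EZ_lim[OF assms, of 2]] by blast
  define B' where "B' = max B 1"
  have B': "B' > 0" "\<And>n. EZ k n 2 \<le> B'" using B by (auto simp: B'_def intro: le_max_iff_disj[THEN iffD2])
  define R where "R = sqrt (2 * B' / \<epsilon>)"
  have pos: "2 * B' / \<epsilon> > 0" using B' e by simp
  have R: "R > 0" "R\<^sup>2 = 2 * B' / \<epsilon>" unfolding R_def using pos by auto
  have "measure (mu k n) {- R<..R} > 1 - \<epsilon>" for n
  proof -
    interpret real_distribution "mu k n" by (rule mu_rd)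
    have "measure (mu k n) {x \<in> space (mu k n). R\<^sup>2 \<le> x\<^sup>2} \<le> (\<integral>x. x\<^sup>2 \<partial>mu k n) / R\<^sup>2"
      using R pos by (intro integral_Markov_inequality_measure[where A="space (mu k n)"] mu_integrable assms) auto
    also have "(\<integral>x. x\<^sup>2 \<partial>mu k n) = EZ k n 2" by (rule mu_moment[OF assms])
    also have "EZ k n 2 / R\<^sup>2 \<le> B' / R\<^sup>2" using B'(2)[of n] R pos by (intro divide_right_mono) auto
    also have "B' / R\<^sup>2 = \<epsilon> / 2" unfolding R(2) using B' e by simp
    finally have m1: "measure (mu k n) {x \<in> space (mu k n). R\<^sup>2 \<le> x\<^sup>2} \<le> \<epsilon> / 2" .
    have sub: "UNIV - {- R<..R} \<subseteq> {x \<in> space (mu k n). R\<^sup>2 \<le> x\<^sup>2}"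
    proof
      fix x assume "x \<in> UNIV - {- R<..R}"
      then have "R \<le> \<bar>x\<bar>" by auto
      then have "R\<^sup>2 \<le> \<bar>x\<bar>\<^sup>2" using R by (intro power_mono) auto
      then show "x \<in> {x \<in> space (mu k n). R\<^sup>2 \<le> x\<^sup>2}" by simp
    qed
    have "measure (mu k n) (UNIV - {- R<..R}) \<le> \<epsilon> / 2"
      using finite_measure_mono[OF sub] m1 by simp
    moreover have "measure (mu k n) (UNIV - {- R<..R}) = 1 - measure (mu k n) {- R<..R}"
      using prob_compl[of "{- R<..R}"] by simp
    ultimately show ?thesis using e by linarith
  qed
  then show "\<exists>a b. a < b \<and> (\<forall>n. 1 - \<epsilon> < measure (mu k n) {a<..b})"
    using R(1) by (intro exI[of _ "- R"] exI[of _ R]) auto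
qed

lemma cdf_transfer:
  assumes "k \<ge> 1"
  shows "cdf (measure_pmf (map_pmf (\<lambda>ts. real n powr (- (real k / (real k + 1))) * real (root_outdeg ts)) (random_tree k n))) x
       = cdf (mu k n) x"
proof -
  let ?g = "\<lambda>d. real n powr (- (real k / (real k + 1))) * real d"
  have "cdf (mu k n) x = measure (measure_pmf (qq k n)) (?g -` {..x} \<inter> space (measure_pmf (qq k n)))"
    unfolding cdf_def mu_def by (rule measure_distr) auto
  also have "\<dots> = measure (measure_pmf (random_tree k n)) (root_outdeg -` (?g -` {..x}))"
    by (simp add: qq_def)
  also have "\<dots> = cdf (measure_pmf (map_pmf (\<lambda>ts. ?g (root_outdeg ts)) (random_tree k n))) x"
    unfolding cdf_def by (simp add: vimage_def)
  finally show ?thesis by simp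
qed

theorem theorem2:
  fixes k :: nat
  assumes "k \<ge> 1"
  shows "(\<forall>n m :: nat.
            pmf (map_pmf root_outdeg (random_tree k n)) m =
              ((real m - (real k - 1) / real k) gchoose m)
              / ((real n - real k / (real k + 1)) gchoose n)
              * (\<Sum>l = 0..m. real (m choose l) * (-1) ^ l
                   * ((real n - 1 - real k * real l / (real k + 1)) gchoose n)))
       \<and> (\<exists>M :: real measure. real_distribution M
           \<and> (\<forall>s :: nat. integrable M (\<lambda>x. x ^ s)
                 \<and> (\<integral>x. x ^ s \<partial>M) =
                    Gamma (1 / (real k + 1)) * Gamma (real s + 1 / real k)
                    / (Gamma (1 / real k) * Gamma (real k / (real k + 1) * real s + 1 / (real k + 1))))
           \<and> (\<forall>N :: real measure. real_distribution N
                 \<and> (\<forall>s :: nat. integrable N (\<lambda>x. x ^ s) \<and> (\<integral>x. x ^ s \<partial>N) = (\<integral>x. x ^ s \<partial>M))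
                 \<longrightarrow> N = M)
           \<and> weak_conv_m
               (\<lambda>n. measure_pmf (map_pmf
                  (\<lambda>ts. real n powr (- (real k / (real k + 1))) * real (root_outdeg ts))
                  (random_tree k n)))
               M)"
proof -
  note k = assms
  have part1: "\<forall>n m :: nat.
            pmf (map_pmf root_outdeg (random_tree k n)) m =
              ((real m - (real k - 1) / real k) gchoose m)
              / ((real n - real k / (real k + 1)) gchoose n)
              * (\<Sum>l = 0..m. real (m choose l) * (-1) ^ l
                   * ((real n - 1 - real k * real l / (real k + 1)) gchoose n))"
    using pmf_Pr[OF k] Pr_Fc[OF k] by (simp add: Fc_def Am_def Bn_def Sg_def gg_def)
  have mpos: "\<And>j. mlim k j \<ge> 0" using mlim_pos[OF k] less_imp_le by blast
  have summ: "\<And>t. summable (\<lambda>j. mlim k j * \<bar>t\<bar> ^ j / fact j)"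
    using mlim_summable[OF k] by simp
  have rdm: "\<And>n. real_distribution (mu k n)" by (rule mu_rd)
  have intm: "\<And>n j. integrable (mu k n) (\<lambda>x. x ^ j)" by (rule mu_integrable[OF k]) simp
  have limm: "\<And>j. (\<lambda>n. \<integral>x. x ^ j \<partial>mu k n) \<longlonglongrightarrow> mlim k j"
    using EZ_lim[OF k] by (simp add: mu_moment[OF k])
  obtain r \<nu> where r: "strict_mono r" and \<nu>: "real_distribution \<nu>" and wc: "weak_conv_m (mu k \<circ> id \<circ> r) \<nu>"
    using tight_imp_convergent_subsubsequence[OF mu_tight[OF k], of id] by (auto simp: strict_mono_def)
  have wc': "weak_conv_m (\<lambda>n. mu k (r n)) \<nu>" using wc by (simp add: comp_def)
  have limr: "\<And>j. (\<lambda>n. \<integral>x. x ^ j \<partial>mu k (r n)) \<longlonglongrightarrow> mlim k j"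
    using LIMSEQ_subseq_LIMSEQ[OF limm r] by (simp add: comp_def)
  have mom: "\<And>j. integrable \<nu> (\<lambda>x. x ^ j) \<and> (\<integral>x. x ^ j \<partial>\<nu>) = mlim k j"
    by (rule limit_moment[OF rdm \<nu> wc' intm limr])
  have charnu: "char \<nu> t = (\<Sum>j. (\<i> * complex_of_real t) ^ j / fact j * complex_of_real (mlim k j))" for t
    by (rule char_moments[OF \<nu> mom summ mpos])
  have charconv: "(\<lambda>n. char (mu k n) t) \<longlonglongrightarrow> char \<nu> t" for t
    unfolding charnu by (rule char_conv_moments[OF rdm intm limm summ mpos])
  have wcm: "weak_conv_m (mu k) \<nu>" by (rule levy_continuity[OF rdm \<nu> charconv])
  have uniq: "N = \<nu>" if N: "real_distribution N"
      and Nm: "\<forall>s :: nat. integrable N (\<lambda>x. x ^ s) \<and> (\<integral>x. x ^ s \<partial>N) = (\<integral>x. x ^ s \<partial>\<nu>)" for N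
  proof -
    have "\<And>j. integrable N (\<lambda>x. x ^ j) \<and> (\<integral>x. x ^ j \<partial>N) = mlim k j" using Nm mom by simp
    from char_moments[OF N this summ mpos] have "char N = char \<nu>" using charnu by (intro ext) simp
    then show ?thesis by (rule Levy_uniqueness[OF N \<nu>])
  qed
  have wfinal: "weak_conv_m
               (\<lambda>n. measure_pmf (map_pmf
                  (\<lambda>ts. real n powr (- (real k / (real k + 1))) * real (root_outdeg ts))
                  (random_tree k n)))
               \<nu>"
    using wcm unfolding weak_conv_m_def weak_conv_def cdf_transfer[OF k] .
  show ?thesis
    using part1 \<nu> mom uniq wfinal unfolding mlim_def by blast
qed


end
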